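(* Let $(\mathbf X_1,\mathbf Y_1)$ and $(\mathbf X_2,\mathbf Y_2)$ be general correlated sources, both uniformly integrable, with $\underline D(\mathbf X_1\Vert\mathbf X_2)>0$ and $\underline D(\mathbf X_2\Vert\mathbf X_1)>0$, and let $(\mathbf X,\mathbf Y)$ be their mixture $P_{X^nY^n}=\alpha_1P_{X_1^nY_1^n}+\alpha_2P_{X_2^nY_2^n}$ with $\alpha_1,\alpha_2>0$, $\alpha_1+\alpha_2=1$. If for $i=1$ or for $i=2$ (or both) the limit $\lim_{n\to\infty}\frac1n\overline H_s^\varepsilon(X_i^n|Y_i^n)$ exists for all sufficiently small $\varepsilon>0$, then \[\overline H_s(\mathbf X|\mathbf Y)=\sum_{i=1,2}\alpha_i\overline H_s(\mathbf X_i|\mathbf Y_i).\]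
   Context: A general correlated source $\{(X^n,Y^n)\}_{n\ge1}$ is an arbitrary sequence of pairs of random variables on $\mathcal X^n\times\mathcal Y^n$, $\mathcal X,\mathcal Y$ finite or countably infinite (no structural assumptions; marginal probabilities positive). Logs base 2. A source is uniformly integrable if $Z_n=\frac1n\log\frac1{P_{X^n|Y^n}(X^n|Y^n)}$ satisfies $\lim_{u\to\infty}\sup_n\sum_{z:|z|\ge u}P_{Z_n}(z)|z|=0$. $\underline D(\mathbf X_1\Vert\mathbf X_2)=\sup\{\beta:\lim_n\Pr\{\frac1n\log\frac{P_{X_1^n}(X_1^n)}{P_{X_2^n}(X_1^n)}<\beta\}=0\}$ with $X_1^n\sim P_{X_1^n}$ (marginals on $\mathcal X^n$). For a source with distributions $P_{X^nY^n}$, $x^n$ and $\varepsilon\in(0,1]$: $\overline h^\varepsilon(x^n|P_{X^nY^n})=\inf\{a\in\mathbb R:\sum_{y^n:\log(1/P_{X^n|Y^n}(x^n|y^n))>a}P_{Y^n|X^n}(y^n|x^n)\le\varepsilon\}$; $\overline H_s^\varepsilon(X^n|Y^n)=\sum_{x^n}P_{X^n}(x^n)\overline h^\varepsilon(x^n|P_{X^nY^n})$; $\overline H_s(\mathbf X|\mathbf Y)=\lim_{\varepsilon\downarrow0}\limsup_n\frac1n\overline H_s^\varepsilon(X^n|Y^n)$; same definitions for each component $(\mathbf X_i,\mathbf Y_i)$. *)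

theory Defs
  imports "HOL-Probability.Probability"
begin

type_synonym ('a, 'b) source = "nat \<Rightarrow> ('a list \<times> 'b list) pmf"

definition general_source :: "('a::countable, 'b::countable) source \<Rightarrow> bool" where
  "general_source P \<longleftrightarrow>
     (\<forall>n. set_pmf (P n) \<subseteq> {(x, y). length x = n \<and> length y = n}) \<and>
     (\<forall>n x. length x = n \<longrightarrow> pmf (map_pmf fst (P n)) x > 0) \<and>
     (\<forall>n y. length y = n \<longrightarrow> pmf (map_pmf snd (P n)) y > 0)"

definition PX :: "('a, 'b) source \<Rightarrow> nat \<Rightarrow> 'a list \<Rightarrow> real" where
  "PX P n x = pmf (map_pmf fst (P n)) x"

definition PY :: "('a, 'b) source \<Rightarrow> nat \<Rightarrow> 'b list \<Rightarrow> real" where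
  "PY P n y = pmf (map_pmf snd (P n)) y"

definition condXY :: "('a, 'b) source \<Rightarrow> nat \<Rightarrow> 'a list \<Rightarrow> 'b list \<Rightarrow> real" where
  "condXY P n x y = pmf (P n) (x, y) / PY P n y"

definition condYX :: "('a, 'b) source \<Rightarrow> nat \<Rightarrow> 'a list \<Rightarrow> 'b list \<Rightarrow> real" where
  "condYX P n x y = pmf (P n) (x, y) / PX P n x"

definition Zdist :: "('a, 'b) source \<Rightarrow> nat \<Rightarrow> real pmf" where
  "Zdist P n = map_pmf (\<lambda>(x, y). (1 / real n) * log 2 (1 / condXY P n x y)) (P n)"

definition uniformly_integrable :: "('a, 'b) source \<Rightarrow> bool" where
  "uniformly_integrable P \<longleftrightarrow>
     ((\<lambda>u::real. SUP n\<in>{1..}. (\<Sum>\<^sub>\<infinity> z\<in>{z. \<bar>z\<bar> \<ge> u}. ennreal (pmf (Zdist P n) z * \<bar>z\<bar>)))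
        \<longlongrightarrow> 0) at_top"

definition D_lower :: "('a, 'b) source \<Rightarrow> ('a, 'c) source \<Rightarrow> ereal" where
  "D_lower P1 P2 = Sup {ereal \<beta> | \<beta>.
     (\<lambda>n. measure_pmf.prob (map_pmf fst (P1 n))
            {x. (1 / real n) * log 2 (PX P1 n x / PX P2 n x) < \<beta>}) \<longlonglongrightarrow> 0}"

definition hbar :: "('a, 'b) source \<Rightarrow> nat \<Rightarrow> real \<Rightarrow> 'a list \<Rightarrow> real" where
  "hbar P n \<epsilon> x = Inf {a::real.
     (\<Sum>\<^sub>\<infinity> y\<in>{y. log 2 (1 / condXY P n x y) > a}. condYX P n x y) \<le> \<epsilon>}"

text \<open>\<open>Hs_eps P \<epsilon> n\<close> is \<open>\<Sum>_x P_{X^n}(x) hbar^\<epsilon>(x)\<close>; for 0 < \<epsilon> < 1 all terms are nonnegative,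
  so the sum is taken in the nonnegative extended reals (it may be infinite).\<close>
definition Hs_eps :: "('a, 'b) source \<Rightarrow> real \<Rightarrow> nat \<Rightarrow> ennreal" where
  "Hs_eps P \<epsilon> n = (\<Sum>\<^sub>\<infinity> x. ennreal (PX P n x * hbar P n \<epsilon> x))"

definition Hs_rate :: "('a, 'b) source \<Rightarrow> real \<Rightarrow> nat \<Rightarrow> ereal" where
  "Hs_rate P \<epsilon> n = ereal (1 / real n) * enn2ereal (Hs_eps P \<epsilon> n)"

definition Hs_upper :: "('a, 'b) source \<Rightarrow> ereal" where
  "Hs_upper P = Lim (at_right 0) (\<lambda>\<epsilon>. limsup (\<lambda>n. Hs_rate P \<epsilon> n))"

end

theory Submission
  imports Defs
begin


lemma nn_integral_pmf_UNIV: "(\<integral>\<^sup>+x. ennreal (pmf p x) \<partial>count_space UNIV) = 1"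
  by (simp add: nn_integral_pmf)

lemma nn_integral_count_singleton:
  "(\<integral>\<^sup>+x'. f x' * indicator {x} x' \<partial>count_space UNIV) = f x"
  using nn_integral_indicator_singleton[of x "count_space UNIV" f] by simp

lemma marg_fst:
  "ennreal (pmf (map_pmf fst p) x) = (\<integral>\<^sup>+y. ennreal (pmf p (x,y)) \<partial>count_space UNIV)"
proof -
  have "ennreal (pmf (map_pmf fst p) x) = emeasure (measure_pmf p) (fst -` {x})"
    by (simp add: pmf_map measure_pmf.emeasure_eq_measure)
  also have "\<dots> = (\<integral>\<^sup>+xy. ennreal (pmf p xy) * indicator (fst -` {x}) xy \<partial>count_space UNIV)"
    by (simp add: nn_integral_pmf[symmetric] nn_integral_count_space_indicator)
  also have "\<dots> = (\<integral>\<^sup>+x'. \<integral>\<^sup>+y. ennreal (pmf p (x',y)) * indicator (fst -` {x}) (x',y) \<partial>count_space UNIV \<partial>count_space UNIV)"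
    by (subst nn_integral_fst_count_space[symmetric]) simp
  also have "\<dots> = (\<integral>\<^sup>+x'. (\<integral>\<^sup>+y. ennreal (pmf p (x',y)) \<partial>count_space UNIV) * indicator {x} x' \<partial>count_space UNIV)"
    by (intro nn_integral_cong) (auto simp: indicator_def)
  also have "\<dots> = (\<integral>\<^sup>+y. ennreal (pmf p (x,y)) \<partial>count_space UNIV)"
    by (rule nn_integral_count_singleton)
  finally show ?thesis .
qed

lemma marg_snd:
  "ennreal (pmf (map_pmf snd p) y) = (\<integral>\<^sup>+x. ennreal (pmf p (x,y)) \<partial>count_space UNIV)"
proof -
  have "map_pmf snd p = map_pmf fst (map_pmf prod.swap p)"
    by (simp add: pmf.map_comp o_def)
  moreover have "pmf (map_pmf prod.swap p) (y,x) = pmf p (x,y)" for x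
    using pmf_map_inj'[of prod.swap p "(x,y)"] by simp
  ultimately show ?thesis by (simp add: marg_fst)
qed

lemma pmf_le_fst: "pmf p (x,y) \<le> pmf (map_pmf fst p) x"
proof -
  have "ennreal (pmf p (x,y)) = (\<integral>\<^sup>+y'. ennreal (pmf p (x,y')) * indicator {y} y' \<partial>count_space UNIV)"
    by (rule nn_integral_count_singleton[symmetric])
  also have "\<dots> \<le> (\<integral>\<^sup>+y'. ennreal (pmf p (x,y')) \<partial>count_space UNIV)"
    by (intro nn_integral_mono) (auto simp: indicator_def)
  finally show ?thesis by (simp add: marg_fst[symmetric])
qed

lemma pmf_le_snd: "pmf p (x,y) \<le> pmf (map_pmf snd p) y"
proof -
  have "ennreal (pmf p (x,y)) = (\<integral>\<^sup>+x'. ennreal (pmf p (x',y)) * indicator {x} x' \<partial>count_space UNIV)"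
    by (rule nn_integral_count_singleton[symmetric])
  also have "\<dots> \<le> (\<integral>\<^sup>+x'. ennreal (pmf p (x',y)) \<partial>count_space UNIV)"
    by (intro nn_integral_mono) (auto simp: indicator_def)
  finally show ?thesis by (simp add: marg_snd[symmetric])
qed

lemma int_fst: "(\<integral>\<^sup>+x. ennreal (pmf (map_pmf fst p) x) * f x \<partial>count_space UNIV) = (\<integral>\<^sup>+xy. f (fst xy) \<partial>measure_pmf p)"
  by (simp add: nn_integral_measure_pmf[symmetric])

lemma int_snd: "(\<integral>\<^sup>+y. ennreal (pmf (map_pmf snd p) y) * f y \<partial>count_space UNIV) = (\<integral>\<^sup>+xy. f (snd xy) \<partial>measure_pmf p)"
  by (simp add: nn_integral_measure_pmf[symmetric])

lemma int_pair: "(\<integral>\<^sup>+x. \<integral>\<^sup>+y. ennreal (pmf p (x,y)) * g x y \<partial>count_space UNIV \<partial>count_space UNIV)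
   = (\<integral>\<^sup>+xy. g (fst xy) (snd xy) \<partial>measure_pmf p)"
  using nn_integral_fst_count_space[of "\<lambda>xy. ennreal (pmf p xy) * g (fst xy) (snd xy)"]
  by (simp add: nn_integral_measure_pmf)


lemma ennreal_infsum_SUP:
  fixes g :: "'a \<Rightarrow> ennreal"
  shows "(\<Sum>\<^sub>\<infinity>x\<in>A. g x) = (SUP X\<in>{X. X \<subseteq> A \<and> finite X}. sum g X)"
proof -
  have "(g has_sum (SUP X\<in>{X. X \<subseteq> A \<and> finite X}. sum g X)) A"
    by (rule nonneg_bounded_partial_sums_imp_has_sum_SUP[where C=\<top>]) auto
  thus ?thesis by (rule infsumI)
qed

lemma nn_integral_count_ge_sum:
  assumes "finite X" "X \<subseteq> A"
  shows "sum g X \<le> (\<integral>\<^sup>+x. g x \<partial>count_space A)"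
proof -
  have "sum g X = (\<integral>\<^sup>+x. g x \<partial>count_space X)"
    using assms by (simp add: nn_integral_count_space_finite)
  also have "\<dots> = (\<integral>\<^sup>+x. g x * indicator X x \<partial>count_space UNIV)"
    by (rule nn_integral_count_space_indicator) simp
  also have "\<dots> \<le> (\<integral>\<^sup>+x. g x * indicator A x \<partial>count_space UNIV)"
    using assms by (intro nn_integral_mono) (auto simp: indicator_def)
  also have "\<dots> = (\<integral>\<^sup>+x. g x \<partial>count_space A)"
    by (simp add: nn_integral_count_space_indicator)
  finally show ?thesis .
qed

lemma infsum_ennreal_eq_nn_integral:
  fixes f :: "'a \<Rightarrow> real"
  assumes nn: "\<And>x. x \<in> A \<Longrightarrow> f x \<ge> 0"
  shows "(\<Sum>\<^sub>\<infinity>x\<in>A. ennreal (f x)) = (\<integral>\<^sup>+x. ennreal (f x) \<partial>count_space A)"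
proof (cases "(\<integral>\<^sup>+x. ennreal (f x) \<partial>count_space A) = \<top>")
  case False
  have int: "integrable (count_space A) f"
    using False nn by (intro integrableI_nonneg) (auto simp: AE_count_space top.not_eq_extremum)
  hence abs: "Infinite_Set_Sum.abs_summable_on f A" by (simp add: abs_summable_on_def)
  have "(\<Sum>\<^sub>\<infinity>x\<in>A. ennreal (f x)) = (SUP X\<in>{X. X \<subseteq> A \<and> finite X}. ennreal (sum f X))"
    unfolding ennreal_infsum_SUP
    by (intro SUP_cong refl) (auto intro!: sum_ennreal nn)
  also have "\<dots> = ennreal (infsetsum f A)"
    by (subst infsetsum_nonneg_is_SUPREMUM_ennreal[OF abs nn]) (auto intro!: SUP_cong)
  also have "\<dots> = (\<integral>\<^sup>+x. ennreal (f x) \<partial>count_space A)"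
    by (rule nn_integral_conv_infsetsum[symmetric, OF abs nn])
  finally show ?thesis .
next
  case True
  show ?thesis
  proof (rule ccontr)
    assume ne: "(\<Sum>\<^sub>\<infinity>x\<in>A. ennreal (f x)) \<noteq> (\<integral>\<^sup>+x. ennreal (f x) \<partial>count_space A)"
    hence lt: "(\<Sum>\<^sub>\<infinity>x\<in>A. ennreal (f x)) < \<top>" using True by (simp add: top.not_eq_extremum)
    then obtain C where C: "(\<Sum>\<^sub>\<infinity>x\<in>A. ennreal (f x)) = ennreal C" "C \<ge> 0"
      using ennreal_cases by (metis less_irrefl top.extremum_strict ennreal_less_top ) 
    have bnd: "sum f X \<le> C" if "finite X" "X \<subseteq> A" for X
    proof -
      have "ennreal (sum f X) = sum (\<lambda>x. ennreal (f x)) X"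
        using that nn by (intro sum_ennreal[symmetric]) auto
      also have "\<dots> \<le> (\<Sum>\<^sub>\<infinity>x\<in>A. ennreal (f x))"
        unfolding ennreal_infsum_SUP using that by (intro SUP_upper) auto
      finally show ?thesis using C by (auto simp add: ennreal_le_iff2 )
    qed
    have "bdd_above (sum (\<lambda>x. norm (f x)) ` {F. F\<subseteq>A \<and> finite F})"
      using bnd nn by (intro bdd_aboveI[where M=C]) (auto simp: subset_iff intro!: sum.cong)
    hence "Infinite_Sum.abs_summable_on f A" by (rule abs_summable_iff_bdd_above[THEN iffD2])
    hence "Infinite_Set_Sum.abs_summable_on f A" by (rule abs_summable_equivalent[THEN iffD1])
    hence "(\<integral>\<^sup>+x. ennreal (f x) \<partial>count_space A) = ennreal (infsetsum f A)"
      using nn by (rule nn_integral_conv_infsetsum)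
    thus False using True by simp
  qed
qed
lemma infsum_real_eq_nn_integral:
  fixes f :: "'a \<Rightarrow> real"
  assumes nn: "\<And>x. x \<in> A \<Longrightarrow> f x \<ge> 0"
    and fin: "(\<integral>\<^sup>+x. ennreal (f x) \<partial>count_space A) \<noteq> \<top>"
  shows "infsum f A = enn2real (\<integral>\<^sup>+x. ennreal (f x) \<partial>count_space A)"
proof -
  have int: "integrable (count_space A) f"
    using fin nn by (intro integrableI_nonneg) (auto simp: AE_count_space top.not_eq_extremum)
  hence abs: "Infinite_Set_Sum.abs_summable_on f A" by (simp add: abs_summable_on_def)
  have "infsum f A = infsetsum f A" by (rule infsetsum_infsum[symmetric, OF abs])
  also have "\<dots> = enn2real (\<integral>\<^sup>+x. ennreal (f x) \<partial>count_space A)"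
    using nn_integral_conv_infsetsum[OF abs nn] infsetsum_nonneg[of A f] nn by simp
  finally show ?thesis .
qed


definition LL :: "('a, 'b) source \<Rightarrow> nat \<Rightarrow> 'a list \<Rightarrow> 'b list \<Rightarrow> real" where
  "LL Q n x y = log 2 (1 / condXY Q n x y)"

definition tail :: "('a, 'b) source \<Rightarrow> nat \<Rightarrow> 'a list \<Rightarrow> real \<Rightarrow> ennreal" where
  "tail Q n x a = (\<integral>\<^sup>+y. ennreal (pmf (Q n) (x,y)) * indicator {y. a < LL Q n x y} y \<partial>count_space UNIV)"

lemma PX_marg: "ennreal (PX Q n x) = (\<integral>\<^sup>+y. ennreal (pmf (Q n) (x,y)) \<partial>count_space UNIV)"
  unfolding PX_def by (rule marg_fst)

lemma PY_marg: "ennreal (PY Q n y) = (\<integral>\<^sup>+x. ennreal (pmf (Q n) (x,y)) \<partial>count_space UNIV)"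
  unfolding PY_def by (rule marg_snd)

lemma pmf_le_PX: "pmf (Q n) (x,y) \<le> PX Q n x" unfolding PX_def by (rule pmf_le_fst)
lemma pmf_le_PY: "pmf (Q n) (x,y) \<le> PY Q n y" unfolding PY_def by (rule pmf_le_snd)

lemma LL_nonneg: "LL Q n x y \<ge> 0"
proof (cases "pmf (Q n) (x,y) = 0")
  case True thus ?thesis by (simp add: LL_def condXY_def log_def)
next
  case False
  hence p: "pmf (Q n) (x,y) > 0" by (simp add: less_le)
  have r: "pmf (Q n) (x,y) \<le> PY Q n y" by (rule pmf_le_PY)
  with p have "1 \<le> 1 / condXY Q n x y" by (simp add: condXY_def field_simps)
  thus ?thesis unfolding LL_def log_def by (intro divide_nonneg_pos ln_ge_zero) auto
qed

lemma LL_pos_eq: assumes "pmf (Q n) (x,y) > 0"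
  shows "LL Q n x y = log 2 (PY Q n y) - log 2 (pmf (Q n) (x,y))"
proof -
  have "PY Q n y > 0" using assms pmf_le_PY[of Q n x y] by linarith
  thus ?thesis using assms by (simp add: LL_def condXY_def log_divide)
qed

lemma tail_le: "tail Q n x a \<le> ennreal (PX Q n x)"
  unfolding tail_def PX_marg by (intro nn_integral_mono) (auto simp: indicator_def)

lemma tail_fin: "tail Q n x a \<noteq> \<top>"
  using tail_le[of Q n x a] by (auto simp: top_unique)

lemma tail_antimono: "a \<le> a' \<Longrightarrow> tail Q n x a' \<le> tail Q n x a"
  unfolding tail_def by (intro nn_integral_mono) (auto simp: indicator_def intro!: mult_left_mono)

lemma tail_neg: "a < 0 \<Longrightarrow> tail Q n x a = ennreal (PX Q n x)"
  unfolding tail_def PX_marg using LL_nonneg[of Q n x]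
  by (intro nn_integral_cong) (auto simp: indicator_def less_le_trans)

lemma hbar_set_iff:
  assumes q: "PX Q n x > 0" and e: "\<epsilon> \<ge> 0"
  shows "((\<Sum>\<^sub>\<infinity>y\<in>{y. log 2 (1 / condXY Q n x y) > a}. condYX Q n x y) \<le> \<epsilon>) \<longleftrightarrow>
         tail Q n x a \<le> ennreal (\<epsilon> * PX Q n x)"
proof -
  let ?S = "{y. log 2 (1 / condXY Q n x y) > a}"
  have S: "?S = {y. a < LL Q n x y}" by (simp add: LL_def)
  have nn: "condYX Q n x y \<ge> 0" for y using q by (simp add: condYX_def)
  have eq: "(\<integral>\<^sup>+y. ennreal (condYX Q n x y) \<partial>count_space ?S) = ennreal (1 / PX Q n x) * tail Q n x a"
  proof -
    have "(\<integral>\<^sup>+y. ennreal (condYX Q n x y) \<partial>count_space ?S) =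
          (\<integral>\<^sup>+y. ennreal (condYX Q n x y) * indicator ?S y \<partial>count_space UNIV)"
      by (rule nn_integral_count_space_indicator) simp
    also have "\<dots> = (\<integral>\<^sup>+y. ennreal (1 / PX Q n x) * (ennreal (pmf (Q n) (x,y)) * indicator {y. a < LL Q n x y} y) \<partial>count_space UNIV)"
    proof (intro nn_integral_cong)
      fix y
      have c: "condYX Q n x y = (1/PX Q n x) * pmf (Q n) (x,y)" by (simp add: condYX_def)
      show "ennreal (condYX Q n x y) * indicator ?S y = ennreal (1 / PX Q n x) * (ennreal (pmf (Q n) (x,y)) * indicator {y. a < LL Q n x y} y)"
        unfolding c S using q by (subst ennreal_mult) (auto simp: mult.assoc)
    qed
    also have "\<dots> = ennreal (1 / PX Q n x) * tail Q n x a"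
      unfolding tail_def by (rule nn_integral_cmult) simp
    finally show ?thesis .
  qed
  have fin: "(\<integral>\<^sup>+y. ennreal (condYX Q n x y) \<partial>count_space ?S) \<noteq> \<top>"
    unfolding eq using tail_fin[of Q n x a] by (simp add: ennreal_mult_eq_top_iff del: ennreal_1)
  have "(\<Sum>\<^sub>\<infinity>y\<in>?S. condYX Q n x y) = enn2real (ennreal (1 / PX Q n x) * tail Q n x a)"
    by (subst infsum_real_eq_nn_integral[OF nn fin]) (simp add: eq)
  also have "\<dots> = enn2real (tail Q n x a) / PX Q n x"
    using q by (simp add: enn2real_mult)
  finally have I: "(\<Sum>\<^sub>\<infinity>y\<in>?S. condYX Q n x y) = enn2real (tail Q n x a) / PX Q n x" .
  show ?thesis
  proof
    assume "(\<Sum>\<^sub>\<infinity>y\<in>?S. condYX Q n x y) \<le> \<epsilon>"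
    hence "enn2real (tail Q n x a) \<le> \<epsilon> * PX Q n x" using q I by (simp add: field_simps)
    thus "tail Q n x a \<le> ennreal (\<epsilon> * PX Q n x)" using tail_fin[of Q n x a]
      by (cases "tail Q n x a") auto
  next
    assume h: "tail Q n x a \<le> ennreal (\<epsilon> * PX Q n x)"
    have "enn2real (tail Q n x a) \<le> \<epsilon> * PX Q n x"
      using h e q by (simp add: enn2real_leI)
    hence "PX Q n x * (\<Sum>\<^sub>\<infinity>y\<in>?S. condYX Q n x y) \<le> PX Q n x * \<epsilon>" using q I by (simp add: field_simps)
    thus "(\<Sum>\<^sub>\<infinity>y\<in>?S. condYX Q n x y) \<le> \<epsilon>" using q by (simp add: mult_le_cancel_left_pos)
  qed
qed


lemma hbar_eq:
  assumes q: "PX Q n x > 0" and e: "\<epsilon> \<ge> 0"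
  shows "hbar Q n \<epsilon> x = Inf {a. tail Q n x a \<le> ennreal (\<epsilon> * PX Q n x)}"
  unfolding hbar_def using hbar_set_iff[OF q e] by simp

lemma tail_set_nonneg:
  assumes q: "PX Q n x > 0" and e: "\<epsilon> < 1" and a: "tail Q n x a \<le> ennreal (\<epsilon> * PX Q n x)"
  shows "a \<ge> 0"
proof (rule ccontr)
  assume "\<not> a \<ge> 0"
  hence "tail Q n x a = ennreal (PX Q n x)" by (intro tail_neg) simp
  with a have "ennreal (PX Q n x) \<le> ennreal (\<epsilon> * PX Q n x)" by simp
  hence "PX Q n x \<le> \<epsilon> * PX Q n x" using q by (simp add: ennreal_le_iff2)
  thus False using q e by (simp add: mult_le_cancel_right1 not_le)
qed

lemma tail_small:
  assumes q: "PX Q n x > 0" and e: "\<epsilon> > 0"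
  shows "\<exists>a. tail Q n x a \<le> ennreal (\<epsilon> * PX Q n x)"
proof -
  define f where "f = (\<lambda>(k::nat) y. ennreal (pmf (Q n) (x,y)) * indicator {y. real k < LL Q n x y} y)"
  have anti: "antimono_on UNIV f"
    unfolding f_def by (auto simp: monotone_on_def le_fun_def indicator_def intro!: mult_left_mono)
  have fin: "integral\<^sup>N (count_space UNIV) (f 0) < \<infinity>"
    using tail_fin[of Q n x 0] by (simp add: f_def tail_def top.not_eq_extremum)
  have "(\<integral>\<^sup>+y. (INF i. f i y) \<partial>count_space UNIV) = (INF i. integral\<^sup>N (count_space UNIV) (f i))"
    by (rule nn_integral_monotone_convergence_INF_decseq[OF anti _ fin]) simp
  moreover have "(INF i. f i y) = 0" for y
  proof -
    obtain k::nat where "LL Q n x y < real k" using reals_Archimedean2 by blast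
    hence "f k y = 0" by (simp add: f_def indicator_def)
    hence "(INF i. f i y) \<le> 0" by (metis INF_lower UNIV_I)
    thus ?thesis by simp
  qed
  ultimately have "(INF i. tail Q n x (real i)) = 0" by (simp add: f_def tail_def)
  moreover have "0 < ennreal (\<epsilon> * PX Q n x)" using q e by simp
  ultimately obtain i where "tail Q n x (real i) < ennreal (\<epsilon> * PX Q n x)"
    by (metis INF_less_iff)
  thus ?thesis by (intro exI[of _ "real i"]) simp
qed

lemma hbar_le:
  assumes q: "PX Q n x > 0" and e: "0 \<le> \<epsilon>" "\<epsilon> < 1" and a: "tail Q n x a \<le> ennreal (\<epsilon> * PX Q n x)"
  shows "hbar Q n \<epsilon> x \<le> a"
  unfolding hbar_eq[OF q e(1)]
  by (rule cInf_lower) (use a tail_set_nonneg[OF q e(2)] in \<open>auto intro!: bdd_belowI[of _ 0]\<close>)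

lemma hbar_nonneg:
  assumes q: "PX Q n x > 0" and e: "0 < \<epsilon>" "\<epsilon> < 1"
  shows "hbar Q n \<epsilon> x \<ge> 0"
  unfolding hbar_eq[OF q less_imp_le[OF e(1)]]
  by (rule cInf_greatest) (use tail_small[OF q e(1)] tail_set_nonneg[OF q e(2)] in auto)

lemma hbar_lt:
  assumes q: "PX Q n x > 0" and e: "0 < \<epsilon>" "\<epsilon> < 1" and a: "hbar Q n \<epsilon> x < a"
  shows "tail Q n x a \<le> ennreal (\<epsilon> * PX Q n x)"
proof -
  let ?T = "{a. tail Q n x a \<le> ennreal (\<epsilon> * PX Q n x)}"
  have ne: "?T \<noteq> {}" using tail_small[OF q e(1)] by auto
  have bdd: "bdd_below ?T" using tail_set_nonneg[OF q e(2)] by (auto intro!: bdd_belowI[of _ 0])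
  from a have "Inf ?T < a" unfolding hbar_eq[OF q less_imp_le[OF e(1)]] .
  then obtain a' where "a' \<in> ?T" "a' < a" using cInf_less_iff[OF ne bdd] by blast
  thus ?thesis using tail_antimono[of a' a Q n x] by auto
qed

lemma hbar_le_dense:
  assumes "\<And>a. h < a \<Longrightarrow> z \<le> a + c"
  shows "z \<le> (h::real) + c"
proof -
  have "z - c \<le> h" by (rule dense_ge) (use assms in force)
  thus ?thesis by simp
qed

lemma hbar_mono:
  assumes q: "PX Q n x > 0" and e: "0 < \<epsilon>" "\<epsilon> \<le> \<epsilon>'" "\<epsilon>' < 1"
  shows "hbar Q n \<epsilon>' x \<le> hbar Q n \<epsilon> x"
proof -
  have "hbar Q n \<epsilon>' x \<le> hbar Q n \<epsilon> x + 0"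
  proof (rule hbar_le_dense)
    fix a assume "hbar Q n \<epsilon> x < a"
    hence "tail Q n x a \<le> ennreal (\<epsilon> * PX Q n x)" using hbar_lt[OF q e(1)] e by auto
    also have "\<dots> \<le> ennreal (\<epsilon>' * PX Q n x)" using e q by (intro ennreal_leI mult_right_mono) auto
    finally show "hbar Q n \<epsilon>' x \<le> a + 0" using hbar_le[OF q _ e(3)] e by auto
  qed
  thus ?thesis by simp
qed

lemma hbar_markov:
  assumes q: "PX Q n x > 0" and e: "0 < \<epsilon>" "\<epsilon> < 1"
  shows "ennreal (PX Q n x * hbar Q n \<epsilon> x) \<le>
         ennreal (1/\<epsilon>) * (\<integral>\<^sup>+y. ennreal (pmf (Q n) (x,y)) * ennreal (LL Q n x y) \<partial>count_space UNIV)"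
    (is "_ \<le> _ * ?I")
proof (cases "?I = \<top>")
  case True thus ?thesis using e by (simp add: ennreal_mult_top)
next
  case False
  then obtain i where i: "?I = ennreal i" "i \<ge> 0" by (cases ?I) auto
  have "hbar Q n \<epsilon> x \<le> i / (\<epsilon> * PX Q n x) + 0"
  proof (rule hbar_le_dense)
    fix a assume a: "i / (\<epsilon> * PX Q n x) < a"
    have epos: "\<epsilon> * PX Q n x > 0" using e q by simp
    have apos: "a > 0" using a i(2) epos by (smt (verit) divide_nonneg_pos)
    have "tail Q n x a \<le> (\<integral>\<^sup>+y. ennreal (1/a) * (ennreal (pmf (Q n) (x,y)) * ennreal (LL Q n x y)) \<partial>count_space UNIV)"
      unfolding tail_def
    proof (intro nn_integral_mono)
      fix y
      show "ennreal (pmf (Q n) (x,y)) * indicator {y. a < LL Q n x y} y \<le> ennreal (1/a) * (ennreal (pmf (Q n) (x,y)) * ennreal (LL Q n x y))"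
      proof (cases "a < LL Q n x y")
        case True
        hence "1 \<le> ennreal (1/a) * ennreal (LL Q n x y)" using apos
          by (subst ennreal_mult[symmetric]) (auto simp: field_simps)
        hence "ennreal (pmf (Q n) (x,y)) * 1 \<le> ennreal (pmf (Q n) (x,y)) * (ennreal (1/a) * ennreal (LL Q n x y))"
          by (rule mult_left_mono) simp
        thus ?thesis using True by (simp add: mult_ac)
      qed simp
    qed
    also have "\<dots> = ennreal (1/a) * ennreal i" by (subst nn_integral_cmult) (auto simp: i)
    also have "\<dots> = ennreal (i / a)" using apos i by (simp add: ennreal_mult[symmetric])
    also have "\<dots> \<le> ennreal (\<epsilon> * PX Q n x)"
      using a apos epos i by (intro ennreal_leI) (simp add: field_simps)
    finally show "hbar Q n \<epsilon> x \<le> a + 0" using hbar_le[OF q _ e(2)] e by auto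
  qed
  hence "PX Q n x * hbar Q n \<epsilon> x \<le> i / \<epsilon>" using q e by (simp add: field_simps)
  hence "ennreal (PX Q n x * hbar Q n \<epsilon> x) \<le> ennreal (i / \<epsilon>)" by (rule ennreal_leI)
  also have "\<dots> = ennreal (1/\<epsilon>) * ?I" using i e by (simp add: ennreal_mult[symmetric])
  finally show ?thesis .
qed


lemma Hs_eps_int:
  assumes e: "0 < \<epsilon>" "\<epsilon> < 1"
  shows "Hs_eps Q \<epsilon> n = (\<integral>\<^sup>+x. ennreal (PX Q n x * hbar Q n \<epsilon> x) \<partial>count_space UNIV)"
proof -
  have nn: "PX Q n x * hbar Q n \<epsilon> x \<ge> 0" for x
  proof (cases "PX Q n x > 0")
    case True thus ?thesis using hbar_nonneg[OF True e] by simp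
  next
    case False
    hence "PX Q n x = 0" using pmf_nonneg[of "map_pmf fst (Q n)" x] by (simp add: PX_def)
    thus ?thesis by simp
  qed
  show ?thesis unfolding Hs_eps_def by (rule infsum_ennreal_eq_nn_integral) (use nn in auto)
qed

lemma Zdist_tail:
  "(\<Sum>\<^sub>\<infinity> z\<in>{z. \<bar>z\<bar> \<ge> u}. ennreal (pmf (Zdist Q n) z * \<bar>z\<bar>)) =
   (\<integral>\<^sup>+xy. ennreal \<bar>LL Q n (fst xy) (snd xy) / real n\<bar> * indicator {z. \<bar>z\<bar> \<ge> u} (LL Q n (fst xy) (snd xy) / real n) \<partial>measure_pmf (Q n))"
proof -
  have "(\<Sum>\<^sub>\<infinity> z\<in>{z. \<bar>z\<bar> \<ge> u}. ennreal (pmf (Zdist Q n) z * \<bar>z\<bar>)) =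
        (\<integral>\<^sup>+z. ennreal (pmf (Zdist Q n) z * \<bar>z\<bar>) \<partial>count_space {z. \<bar>z\<bar> \<ge> u})"
    by (rule infsum_ennreal_eq_nn_integral) simp
  also have "\<dots> = (\<integral>\<^sup>+z. ennreal (pmf (Zdist Q n) z) * (ennreal \<bar>z\<bar> * indicator {z. \<bar>z\<bar> \<ge> u} z) \<partial>count_space UNIV)"
    by (subst nn_integral_count_space_indicator) (auto intro!: nn_integral_cong simp: ennreal_mult mult.assoc)
  also have "\<dots> = (\<integral>\<^sup>+z. ennreal \<bar>z\<bar> * indicator {z. \<bar>z\<bar> \<ge> u} z \<partial>measure_pmf (Zdist Q n))"
    by (simp add: nn_integral_measure_pmf)
  also have "\<dots> = (\<integral>\<^sup>+xy. ennreal \<bar>LL Q n (fst xy) (snd xy) / real n\<bar> * indicator {z. \<bar>z\<bar> \<ge> u} (LL Q n (fst xy) (snd xy) / real n) \<partial>measure_pmf (Q n))"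
    unfolding Zdist_def by (simp add: case_prod_beta LL_def)
  finally show ?thesis .
qed

lemma ui_bound:
  assumes ui: "uniformly_integrable Q" and z: "\<zeta> > 0"
  shows "\<exists>u>0. \<forall>n\<ge>1. \<forall>S. (\<integral>\<^sup>+xy. indicator S xy * ennreal (LL Q n (fst xy) (snd xy)) \<partial>measure_pmf (Q n))
            \<le> ennreal (real n) * (ennreal u * emeasure (measure_pmf (Q n)) S + ennreal \<zeta>)"
proof -
  let ?F = "\<lambda>u::real. SUP n\<in>{1..}. (\<Sum>\<^sub>\<infinity> z\<in>{z. \<bar>z\<bar> \<ge> u}. ennreal (pmf (Zdist Q n) z * \<bar>z\<bar>))"
  have "(?F \<longlongrightarrow> 0) at_top" using ui unfolding uniformly_integrable_def .
  hence "eventually (\<lambda>u. ?F u < ennreal \<zeta>) at_top" using z by (intro order_tendstoD(2)) auto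
  then obtain U where U: "\<And>u. u \<ge> U \<Longrightarrow> ?F u < ennreal \<zeta>" by (auto simp: eventually_at_top_linorder)
  define u where "u = max U 1"
  have upos: "u > 0" by (simp add: u_def)
  have Fu: "?F u < ennreal \<zeta>" using U[of u] by (simp add: u_def del: max_def)
  show ?thesis
  proof (intro exI[of _ u] conjI allI impI upos)
    fix n :: nat and S assume n: "n \<ge> 1"
    let ?Z = "\<lambda>xy. LL Q n (fst xy) (snd xy) / real n"
    have tl: "(\<integral>\<^sup>+xy. ennreal \<bar>?Z xy\<bar> * indicator {z. \<bar>z\<bar> \<ge> u} (?Z xy) \<partial>measure_pmf (Q n)) \<le> ennreal \<zeta>"
    proof -
      have "(\<integral>\<^sup>+xy. ennreal \<bar>?Z xy\<bar> * indicator {z. \<bar>z\<bar> \<ge> u} (?Z xy) \<partial>measure_pmf (Q n))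
          = (\<Sum>\<^sub>\<infinity> z\<in>{z. \<bar>z\<bar> \<ge> u}. ennreal (pmf (Zdist Q n) z * \<bar>z\<bar>))"
        by (rule Zdist_tail[symmetric])
      also have "\<dots> \<le> ?F u" using n by (intro SUP_upper) auto
      finally show ?thesis using Fu by simp
    qed
    have pw: "indicator S xy * ennreal (LL Q n (fst xy) (snd xy)) \<le>
          ennreal (real n) * (ennreal u * indicator S xy + ennreal \<bar>?Z xy\<bar> * indicator {z. \<bar>z\<bar> \<ge> u} (?Z xy))" for xy
    proof -
      have L0: "LL Q n (fst xy) (snd xy) \<ge> 0" by (rule LL_nonneg)
      have Leq: "LL Q n (fst xy) (snd xy) = real n * \<bar>?Z xy\<bar>" using n L0 by simp
      show ?thesis
      proof (cases "\<bar>?Z xy\<bar> \<ge> u")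
        case True
        have "indicator S xy * ennreal (LL Q n (fst xy) (snd xy)) \<le> ennreal (LL Q n (fst xy) (snd xy))"
          by (auto simp: indicator_def)
        also have "\<dots> = ennreal (real n) * ennreal \<bar>?Z xy\<bar>" by (metis Leq ennreal_mult abs_ge_zero of_nat_0_le_iff)
        also have "\<dots> \<le> ennreal (real n) * (ennreal u * indicator S xy + ennreal \<bar>?Z xy\<bar> * indicator {z. \<bar>z\<bar> \<ge> u} (?Z xy))"
          using True by (intro mult_left_mono) auto
        finally show ?thesis .
      next
        case False
        hence "LL Q n (fst xy) (snd xy) / real n \<le> u" using L0 by simp
        hence "LL Q n (fst xy) (snd xy) \<le> real n * u" using n by (simp add: field_simps)
        hence "indicator S xy * ennreal (LL Q n (fst xy) (snd xy)) \<le> indicator S xy * ennreal (real n * u)"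
          by (intro mult_left_mono ennreal_leI) auto
        also have "\<dots> = ennreal (real n) * (ennreal u * indicator S xy)" using upos
          by (simp add: ennreal_mult mult_ac)
        also have "\<dots> \<le> ennreal (real n) * (ennreal u * indicator S xy + ennreal \<bar>?Z xy\<bar> * indicator {z. \<bar>z\<bar> \<ge> u} (?Z xy))"
          by (intro mult_left_mono) auto
        finally show ?thesis .
      qed
    qed
    have "(\<integral>\<^sup>+xy. indicator S xy * ennreal (LL Q n (fst xy) (snd xy)) \<partial>measure_pmf (Q n))
        \<le> (\<integral>\<^sup>+xy. ennreal (real n) * (ennreal u * indicator S xy + ennreal \<bar>?Z xy\<bar> * indicator {z. \<bar>z\<bar> \<ge> u} (?Z xy)) \<partial>measure_pmf (Q n))"
      by (intro nn_integral_mono pw)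
    also have "\<dots> = ennreal (real n) * (ennreal u * emeasure (measure_pmf (Q n)) S +
        (\<integral>\<^sup>+xy. ennreal \<bar>?Z xy\<bar> * indicator {z. \<bar>z\<bar> \<ge> u} (?Z xy) \<partial>measure_pmf (Q n)))"
      by (simp add: nn_integral_cmult nn_integral_add nn_integral_cmult_indicator)
    also have "\<dots> \<le> ennreal (real n) * (ennreal u * emeasure (measure_pmf (Q n)) S + ennreal \<zeta>)"
      by (intro mult_left_mono add_left_mono tl) auto
    finally show "(\<integral>\<^sup>+xy. indicator S xy * ennreal (LL Q n (fst xy) (snd xy)) \<partial>measure_pmf (Q n))
            \<le> ennreal (real n) * (ennreal u * emeasure (measure_pmf (Q n)) S + ennreal \<zeta>)" .
  qed
qed


lemma PX_nonneg: "PX Q n x \<ge> 0" by (simp add: PX_def)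
lemma PY_nonneg: "PY Q n y \<ge> 0" by (simp add: PY_def)

locale mixsrc =
  fixes A B M :: "('a, 'b) source" and a b :: real
  assumes a_pos: "a > 0" and b_pos: "b > 0" and ab: "a + b = 1"
    and mix: "\<And>n xy. pmf (M n) xy = a * pmf (A n) xy + b * pmf (B n) xy"
begin

lemma swap: "mixsrc B A M b a"
  using a_pos b_pos ab mix by unfold_locales (auto simp: add.commute)


lemma ennreal_mix: "ennreal (pmf (M n) xy) = ennreal a * ennreal (pmf (A n) xy) + ennreal b * ennreal (pmf (B n) xy)"
  using a_pos b_pos by (simp add: mix ennreal_plus ennreal_mult)

lemma PX_mix: "PX M n x = a * PX A n x + b * PX B n x"
proof -
  have "ennreal (PX M n x) = (\<integral>\<^sup>+y. ennreal a * ennreal (pmf (A n) (x,y)) + ennreal b * ennreal (pmf (B n) (x,y)) \<partial>count_space UNIV)"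
    unfolding PX_marg using a_pos b_pos by (intro nn_integral_cong) (rule ennreal_mix)
  also have "\<dots> = ennreal a * ennreal (PX A n x) + ennreal b * ennreal (PX B n x)"
    by (simp add: nn_integral_add nn_integral_cmult PX_marg)
  also have "\<dots> = ennreal (a * PX A n x + b * PX B n x)"
    using a_pos b_pos by (simp add: ennreal_mult ennreal_plus PX_def)
  finally show ?thesis using a_pos b_pos PX_nonneg[of A n x] PX_nonneg[of B n x] PX_nonneg[of M n x]
    by (subst (asm) ennreal_inj) auto
qed

lemma PY_mix: "PY M n y = a * PY A n y + b * PY B n y"
proof -
  have "ennreal (PY M n y) = (\<integral>\<^sup>+x. ennreal a * ennreal (pmf (A n) (x,y)) + ennreal b * ennreal (pmf (B n) (x,y)) \<partial>count_space UNIV)"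
    unfolding PY_marg using a_pos b_pos by (intro nn_integral_cong) (rule ennreal_mix)
  also have "\<dots> = ennreal a * ennreal (PY A n y) + ennreal b * ennreal (PY B n y)"
    by (simp add: nn_integral_add nn_integral_cmult PY_marg)
  also have "\<dots> = ennreal (a * PY A n y + b * PY B n y)"
    using a_pos b_pos by (simp add: ennreal_mult ennreal_plus PY_def)
  finally show ?thesis using a_pos b_pos PY_nonneg[of A n y] PY_nonneg[of B n y] PY_nonneg[of M n y]
    by (subst (asm) ennreal_inj) auto
qed

definition EA :: "nat \<Rightarrow> real \<Rightarrow> 'a list \<Rightarrow> 'b list set" where
  "EA n \<delta> x = {y. a * 2 powr (real n * \<delta>) * PY A n y < PY M n y \<or>
                  a * 2 powr (real n * \<delta>) * pmf (A n) (x,y) < pmf (M n) (x,y)}"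

definition mA :: "nat \<Rightarrow> real \<Rightarrow> 'a list \<Rightarrow> ennreal" where
  "mA n \<delta> x = (\<integral>\<^sup>+y. ennreal (pmf (A n) (x,y)) * indicator (EA n \<delta> x) y \<partial>count_space UNIV)"

definition good :: "nat \<Rightarrow> real \<Rightarrow> real \<Rightarrow> 'a list \<Rightarrow> bool" where
  "good n \<delta> \<eta> x \<longleftrightarrow> b * PX B n x \<le> a * PX A n x \<and>
     2 * (b * PX B n x / PX M n x) * PX A n x + enn2real (mA n \<delta> x) \<le> \<eta> * PX A n x"

lemma mA_le: "mA n \<delta> x \<le> ennreal (PX A n x)"
  unfolding mA_def PX_marg by (intro nn_integral_mono) (auto simp: indicator_def)

lemma mA_eq: "mA n \<delta> x = ennreal (enn2real (mA n \<delta> x))"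
  using mA_le[of n \<delta> x] by (cases "mA n \<delta> x") (auto simp: top_unique)

lemma LM_le:
  assumes p: "pmf (A n) (x,y) > 0" and y: "y \<notin> EA n \<delta> x"
  shows "LL M n x y \<le> LL A n x y + real n * \<delta>"
proof -
  let ?t = "2 powr (real n * \<delta>)"
  have pM: "pmf (M n) (x,y) \<ge> a * pmf (A n) (x,y)" using b_pos by (simp add: mix)
  have pMpos: "pmf (M n) (x,y) > 0" using pM p a_pos by (smt (verit) mult_pos_pos)
  have rA: "PY A n y \<ge> pmf (A n) (x,y)" by (rule pmf_le_PY)
  have rApos: "PY A n y > 0" using rA p by linarith
  have rM: "PY M n y \<le> a * ?t * PY A n y" using y by (simp add: EA_def not_less)
  have rMpos: "PY M n y > 0" using pMpos pmf_le_PY[of M n x y] by linarith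
  have "LL M n x y = log 2 (PY M n y) - log 2 (pmf (M n) (x,y))" by (rule LL_pos_eq[of M n x y, OF pMpos])
  also have "\<dots> \<le> log 2 (a * ?t * PY A n y) - log 2 (a * pmf (A n) (x,y))"
    using rM pM rMpos p a_pos by (intro diff_mono log_mono) auto
  also have "\<dots> = real n * \<delta> + (log 2 (PY A n y) - log 2 (pmf (A n) (x,y)))"
    using a_pos rApos p by (simp add: log_mult)
  also have "\<dots> = LL A n x y + real n * \<delta>" by (simp add: LL_pos_eq[of A n x y, OF p])
  finally show ?thesis .
qed

lemma LA_le:
  assumes p: "pmf (A n) (x,y) > 0" and y: "y \<notin> EA n \<delta> x"
  shows "LL A n x y \<le> LL M n x y + real n * \<delta>"
proof -
  let ?t = "2 powr (real n * \<delta>)"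
  have pM: "pmf (M n) (x,y) \<le> a * ?t * pmf (A n) (x,y)" using y by (simp add: EA_def not_less)
  have pM2: "pmf (M n) (x,y) \<ge> a * pmf (A n) (x,y)" using b_pos by (simp add: mix)
  have pMpos: "pmf (M n) (x,y) > 0" using pM2 p a_pos by (smt (verit) mult_pos_pos)
  have rA: "PY A n y \<ge> pmf (A n) (x,y)" by (rule pmf_le_PY)
  have rApos: "PY A n y > 0" using rA p by linarith
  have rM: "PY M n y \<ge> a * PY A n y" using b_pos PY_nonneg[of B n y] by (simp add: PY_mix)
  have "LL A n x y = log 2 (PY A n y) - log 2 (pmf (A n) (x,y))" by (rule LL_pos_eq[of A n x y, OF p])
  also have "\<dots> = log 2 (a * PY A n y) - log 2 (a * ?t * pmf (A n) (x,y)) + real n * \<delta>"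
    using a_pos rApos p by (simp add: log_mult)
  also have "\<dots> \<le> log 2 (PY M n y) - log 2 (pmf (M n) (x,y)) + real n * \<delta>"
    using rM pM rApos pMpos a_pos by (intro add_right_mono diff_mono log_mono) auto
  also have "\<dots> = LL M n x y + real n * \<delta>" by (simp add: LL_pos_eq[of M n x y, OF pMpos])
  finally show ?thesis .
qed


lemma PX_M_pos: "PX A n x > 0 \<Longrightarrow> PX M n x > 0"
  using a_pos b_pos PX_nonneg[of B n x] by (simp add: PX_mix add_pos_nonneg)

lemma real_PU:
  fixes qA s qM m e h :: real
  assumes "qM = a * qA + s" "s \<ge> 0" "s \<le> a * qA" "2 * (s / qM) * qA + m \<le> h * qA"
    "qM > 0" "0 \<le> e" "qA > 0"
  shows "a * (e - h) * qA + a * m + s \<le> e * qM"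
proof -
  have h1: "s \<le> a * (2 * (s / qM) * qA)"
  proof -
    have "qM \<le> 2 * a * qA" using assms by linarith
    hence "(s / qM) * qM \<le> (s / qM) * (2 * a * qA)" using assms by (intro mult_left_mono) auto
    thus ?thesis using assms by (simp add: mult_ac)
  qed
  have "m \<le> h * qA - 2 * (s / qM) * qA" using assms by linarith
  hence "a * m \<le> a * (h * qA - 2 * (s / qM) * qA)" using a_pos by (simp add: mult_left_mono)
  hence h3: "a * m \<le> a * h * qA - s" using h1 by (simp add: right_diff_distrib mult_ac)
  have "a * (e - h) * qA + a * m + s \<le> a * e * qA" using h3 by (simp add: algebra_simps)
  also have "\<dots> \<le> e * qM" using assms by (simp add: algebra_simps)
  finally show ?thesis .
qed

lemma real_PL:
  fixes qA s qM m e h :: real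
  assumes "qM = a * qA + s" "s \<ge> 0" "s \<le> a * qA" "2 * (s / qM) * qA + m \<le> h * qA"
    "qM > 0" "0 \<le> e" "e < 1" "qA > 0"
  shows "e * qM / a + m \<le> (e + h) * qA"
proof -
  have h1: "e * (s / a) \<le> 2 * (s / qM) * qA"
  proof -
    have "qM / a \<le> 2 * qA" using assms a_pos by (simp add: field_simps)
    hence "(s / qM) * (qM / a) \<le> (s / qM) * (2 * qA)" using assms by (intro mult_left_mono) auto
    hence "s / a \<le> 2 * (s / qM) * qA" using assms by (simp add: mult_ac)
    moreover have "e * (s / a) \<le> s / a" using assms a_pos by (intro mult_left_le_one_le) auto
    ultimately show ?thesis by linarith
  qed
  have eq: "e * qM / a = e * qA + e * (s / a)" using assms a_pos by (simp add: field_simps)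
  show ?thesis using h1 eq assms(4) by (simp add: algebra_simps)
qed

lemma PU:
  assumes q: "PX A n x > 0" and g: "good n \<delta> \<eta> x" and e: "0 < \<eta>" "\<eta> < \<epsilon>" "\<epsilon> < 1"
  shows "hbar M n \<epsilon> x \<le> hbar A n (\<epsilon> - \<eta>) x + real n * \<delta>"
proof (rule hbar_le_dense)
  fix a' assume a': "hbar A n (\<epsilon> - \<eta>) x < a'"
  have tA: "tail A n x a' \<le> ennreal ((\<epsilon> - \<eta>) * PX A n x)"
    using hbar_lt[OF q _ _ a'] e by auto
  have qM: "PX M n x > 0" using PX_M_pos[OF q] .
  let ?c = "real n * \<delta>"
  have "tail M n x (a' + ?c) \<le> (\<integral>\<^sup>+y. ennreal a * (ennreal (pmf (A n) (x,y)) * indicator {y. a' < LL A n x y} y)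
      + ennreal a * (ennreal (pmf (A n) (x,y)) * indicator (EA n \<delta> x) y) + ennreal b * ennreal (pmf (B n) (x,y)) \<partial>count_space UNIV)"
    unfolding tail_def
  proof (intro nn_integral_mono)
    fix y
    show "ennreal (pmf (M n) (x, y)) * indicator {y. a' + ?c < LL M n x y} y \<le>
      ennreal a * (ennreal (pmf (A n) (x,y)) * indicator {y. a' < LL A n x y} y)
      + ennreal a * (ennreal (pmf (A n) (x,y)) * indicator (EA n \<delta> x) y) + ennreal b * ennreal (pmf (B n) (x,y))"
    proof (cases "a' + ?c < LL M n x y")
      case False thus ?thesis by simp
    next
      case True
      have "ennreal a * ennreal (pmf (A n) (x,y)) \<le>
            ennreal a * (ennreal (pmf (A n) (x,y)) * indicator {y. a' < LL A n x y} y)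
          + ennreal a * (ennreal (pmf (A n) (x,y)) * indicator (EA n \<delta> x) y)"
      proof (cases "pmf (A n) (x,y) > 0 \<and> y \<notin> EA n \<delta> x")
        case True2: True
        hence "LL M n x y \<le> LL A n x y + ?c" using LM_le by blast
        hence "a' < LL A n x y" using True by linarith
        thus ?thesis by simp
      next
        case False
        hence "pmf (A n) (x,y) = 0 \<or> y \<in> EA n \<delta> x" using pmf_nonneg[of "A n" "(x,y)"] by linarith
        thus ?thesis by auto
      qed
      thus ?thesis using True by (simp add: ennreal_mix add_right_mono)
    qed
  qed
  also have "\<dots> = ennreal a * tail A n x a' + ennreal a * mA n \<delta> x + ennreal b * ennreal (PX B n x)"
    by (simp add: nn_integral_add nn_integral_cmult tail_def mA_def PX_marg)
  also have "\<dots> \<le> ennreal a * ennreal ((\<epsilon> - \<eta>) * PX A n x) + ennreal a * ennreal (enn2real (mA n \<delta> x)) + ennreal b * ennreal (PX B n x)"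
    using tA by (intro add_mono mult_left_mono) (auto simp: mA_eq[symmetric])
  also have "\<dots> = ennreal (a * ((\<epsilon> - \<eta>) * PX A n x) + a * enn2real (mA n \<delta> x) + b * PX B n x)"
    using a_pos b_pos e PX_nonneg[of A n x] PX_nonneg[of B n x]
    by (simp add: ennreal_mult ennreal_plus)
  also have "\<dots> \<le> ennreal (\<epsilon> * PX M n x)"
  proof (rule ennreal_leI)
    have "a * (\<epsilon> - \<eta>) * PX A n x + a * enn2real (mA n \<delta> x) + b * PX B n x \<le> \<epsilon> * PX M n x"
      by (rule real_PU) (use g qM q e b_pos PX_nonneg[of B n x] in \<open>auto simp: good_def PX_mix\<close>)
    thus "a * ((\<epsilon> - \<eta>) * PX A n x) + a * enn2real (mA n \<delta> x) + b * PX B n x \<le> \<epsilon> * PX M n x"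
      by (simp add: mult.assoc)
  qed
  finally show "hbar M n \<epsilon> x \<le> a' + ?c" using hbar_le[OF qM _ e(3)] e by auto
qed

lemma PL:
  assumes q: "PX A n x > 0" and g: "good n \<delta> \<eta> x" and e: "0 < \<epsilon>" "0 < \<eta>" "\<epsilon> + \<eta> < 1"
  shows "hbar A n (\<epsilon> + \<eta>) x \<le> hbar M n \<epsilon> x + real n * \<delta>"
proof (rule hbar_le_dense)
  fix a' assume a': "hbar M n \<epsilon> x < a'"
  have qM: "PX M n x > 0" using PX_M_pos[OF q] .
  have tM: "tail M n x a' \<le> ennreal (\<epsilon> * PX M n x)"
    using hbar_lt[OF qM _ _ a'] e by auto
  let ?c = "real n * \<delta>"
  have "tail A n x (a' + ?c) \<le> (\<integral>\<^sup>+y. ennreal (1/a) * (ennreal (pmf (M n) (x,y)) * indicator {y. a' < LL M n x y} y)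
      + ennreal (pmf (A n) (x,y)) * indicator (EA n \<delta> x) y \<partial>count_space UNIV)"
    unfolding tail_def
  proof (intro nn_integral_mono)
    fix y
    have pA: "ennreal (pmf (A n) (x,y)) \<le> ennreal (1/a) * ennreal (pmf (M n) (x,y))"
    proof -
      have "pmf (A n) (x,y) \<le> (1/a) * pmf (M n) (x,y)"
        using a_pos b_pos pmf_nonneg[of "B n" "(x,y)"] by (simp add: mix field_simps)
      thus ?thesis using a_pos by (simp add: ennreal_mult[symmetric])
    qed
    show "ennreal (pmf (A n) (x, y)) * indicator {y. a' + ?c < LL A n x y} y \<le>
      ennreal (1/a) * (ennreal (pmf (M n) (x,y)) * indicator {y. a' < LL M n x y} y)
      + ennreal (pmf (A n) (x,y)) * indicator (EA n \<delta> x) y"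
    proof (cases "a' + ?c < LL A n x y")
      case False thus ?thesis by simp
    next
      case True
      show ?thesis
      proof (cases "pmf (A n) (x,y) > 0 \<and> y \<notin> EA n \<delta> x")
        case True2: True
        hence "LL A n x y \<le> LL M n x y + ?c" using LA_le by blast
        hence "a' < LL M n x y" using True by linarith
        thus ?thesis using True pA by (simp add: add_increasing2)
      next
        case False
        hence "pmf (A n) (x,y) = 0 \<or> y \<in> EA n \<delta> x" using pmf_nonneg[of "A n" "(x,y)"] by linarith
        thus ?thesis by (auto simp: indicator_def add_increasing)
      qed
    qed
  qed
  also have "\<dots> = ennreal (1/a) * tail M n x a' + mA n \<delta> x"
    by (simp add: nn_integral_add nn_integral_cmult tail_def mA_def)
  also have "\<dots> \<le> ennreal (1/a) * ennreal (\<epsilon> * PX M n x) + ennreal (enn2real (mA n \<delta> x))"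
    using tM by (intro add_mono mult_left_mono) (auto simp: mA_eq[symmetric])
  also have "\<dots> = ennreal (\<epsilon> * PX M n x / a + enn2real (mA n \<delta> x))"
    using a_pos e PX_nonneg[of M n x]
    by (simp add: ennreal_mult[symmetric] ennreal_plus)
  also have "\<dots> \<le> ennreal ((\<epsilon> + \<eta>) * PX A n x)"
  proof (rule ennreal_leI)
    show "\<epsilon> * PX M n x / a + enn2real (mA n \<delta> x) \<le> (\<epsilon> + \<eta>) * PX A n x"
      by (rule real_PL[where s="b * PX B n x"]) (use g qM q e b_pos PX_nonneg[of B n x] in \<open>auto simp: good_def PX_mix\<close>)
  qed
  finally show "hbar A n (\<epsilon> + \<eta>) x \<le> a' + ?c" using hbar_le[OF q _ e(3)] e by auto
qed

end


definition G :: "('a, 'b) source \<Rightarrow> ('a, 'b) source \<Rightarrow> nat \<Rightarrow> real \<Rightarrow> ennreal" where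
  "G Q M n \<epsilon> = (\<integral>\<^sup>+x. ennreal (PX Q n x * hbar M n \<epsilon> x) \<partial>count_space UNIV)"

lemma PX_sum1: "(\<integral>\<^sup>+x. ennreal (PX Q n x) \<partial>count_space UNIV) = 1"
  unfolding PX_def by (rule nn_integral_pmf_UNIV)

lemma PX_zero: "\<not> PX Q n x > 0 \<Longrightarrow> PX Q n x = 0"
  using PX_nonneg[of Q n x] by linarith

context mixsrc begin

definition Bad :: "nat \<Rightarrow> real \<Rightarrow> real \<Rightarrow> 'a list \<Rightarrow> bool" where
  "Bad n \<delta> \<eta> x \<longleftrightarrow> PX A n x > 0 \<and> \<not> good n \<delta> \<eta> x"

lemma Hs_decomp:
  assumes e: "0 < \<epsilon>" "\<epsilon> < 1"
  shows "Hs_eps M \<epsilon> n = ennreal a * G A M n \<epsilon> + ennreal b * G B M n \<epsilon>"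
proof -
  have "ennreal (PX M n x * hbar M n \<epsilon> x) = ennreal a * ennreal (PX A n x * hbar M n \<epsilon> x) + ennreal b * ennreal (PX B n x * hbar M n \<epsilon> x)" for x
  proof (cases "PX M n x > 0")
    case True
    have h: "hbar M n \<epsilon> x \<ge> 0" by (rule hbar_nonneg[OF True e])
    show ?thesis using h a_pos b_pos PX_nonneg[of A n x] PX_nonneg[of B n x]
      by (simp add: PX_mix ennreal_mult[symmetric] ennreal_plus[symmetric] algebra_simps del: ennreal_plus)
  next
    case False
    hence "PX M n x = 0" by (rule PX_zero)
    hence "PX A n x = 0" "PX B n x = 0" using a_pos b_pos PX_nonneg[of A n x] PX_nonneg[of B n x]
      by (simp_all add: PX_mix add_nonneg_eq_0_iff)
    thus ?thesis using \<open>PX M n x = 0\<close> by simp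
  qed
  thus ?thesis unfolding Hs_eps_int[OF e] G_def
    by (simp add: nn_integral_add nn_integral_cmult)
qed

lemma GU_n:
  assumes e: "0 < \<eta>" "\<eta> < \<epsilon>" "\<epsilon> < 1" and d: "\<delta> \<ge> 0"
  shows "G A M n \<epsilon> \<le> Hs_eps A (\<epsilon> - \<eta>) n + ennreal (real n * \<delta>) +
     (\<integral>\<^sup>+x. indicator {x. Bad n \<delta> \<eta> x} x * ennreal (PX A n x * hbar M n \<epsilon> x) \<partial>count_space UNIV)"
proof -
  have e': "0 < \<epsilon> - \<eta>" "\<epsilon> - \<eta> < 1" using e by auto
  have pw: "ennreal (PX A n x * hbar M n \<epsilon> x) \<le> ennreal (PX A n x * hbar A n (\<epsilon> - \<eta>) x) + ennreal (PX A n x) * ennreal (real n * \<delta>)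
      + indicator {x. Bad n \<delta> \<eta> x} x * ennreal (PX A n x * hbar M n \<epsilon> x)" for x
  proof (cases "Bad n \<delta> \<eta> x")
    case True thus ?thesis by simp
  next
    case nb: False
    show ?thesis
    proof (cases "PX A n x > 0")
      case False thus ?thesis using PX_zero[OF False] by simp
    next
      case True
      hence g: "good n \<delta> \<eta> x" using nb by (simp add: Bad_def)
      have h: "hbar M n \<epsilon> x \<le> hbar A n (\<epsilon> - \<eta>) x + real n * \<delta>" by (rule PU[OF True g e])
      have h0: "hbar A n (\<epsilon> - \<eta>) x \<ge> 0" by (rule hbar_nonneg[OF True e'])
      have "PX A n x * hbar M n \<epsilon> x \<le> PX A n x * hbar A n (\<epsilon> - \<eta>) x + PX A n x * (real n * \<delta>)"
        using h True by (simp add: distrib_left[symmetric] mult_left_mono)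
      hence "ennreal (PX A n x * hbar M n \<epsilon> x) \<le> ennreal (PX A n x * hbar A n (\<epsilon> - \<eta>) x + PX A n x * (real n * \<delta>))"
        by (rule ennreal_leI)
      also have "\<dots> = ennreal (PX A n x * hbar A n (\<epsilon> - \<eta>) x) + ennreal (PX A n x) * ennreal (real n * \<delta>)"
        using True h0 d by (simp add: ennreal_plus ennreal_mult)
      finally show ?thesis by (simp add: add_increasing2)
    qed
  qed
  have "G A M n \<epsilon> \<le> (\<integral>\<^sup>+x. ennreal (PX A n x * hbar A n (\<epsilon> - \<eta>) x) + ennreal (PX A n x) * ennreal (real n * \<delta>)
      + indicator {x. Bad n \<delta> \<eta> x} x * ennreal (PX A n x * hbar M n \<epsilon> x) \<partial>count_space UNIV)"
    unfolding G_def by (intro nn_integral_mono pw)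
  also have "\<dots> = Hs_eps A (\<epsilon> - \<eta>) n + ennreal (real n * \<delta>) +
     (\<integral>\<^sup>+x. indicator {x. Bad n \<delta> \<eta> x} x * ennreal (PX A n x * hbar M n \<epsilon> x) \<partial>count_space UNIV)"
    by (simp add: nn_integral_add nn_integral_multc PX_sum1 Hs_eps_int[OF e'])
  finally show ?thesis .
qed

lemma GL_n:
  assumes e: "0 < \<epsilon>" "0 < \<eta>" "\<epsilon> + \<eta> < 1" and d: "\<delta> \<ge> 0"
  shows "Hs_eps A (\<epsilon> + \<eta>) n \<le> G A M n \<epsilon> + ennreal (real n * \<delta>) +
     (\<integral>\<^sup>+x. indicator {x. Bad n \<delta> \<eta> x} x * ennreal (PX A n x * hbar A n (\<epsilon> + \<eta>) x) \<partial>count_space UNIV)"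
proof -
  have e': "0 < \<epsilon> + \<eta>" "\<epsilon> + \<eta> < 1" using e by auto
  have pw: "ennreal (PX A n x * hbar A n (\<epsilon> + \<eta>) x) \<le> ennreal (PX A n x * hbar M n \<epsilon> x) + ennreal (PX A n x) * ennreal (real n * \<delta>)
      + indicator {x. Bad n \<delta> \<eta> x} x * ennreal (PX A n x * hbar A n (\<epsilon> + \<eta>) x)" for x
  proof (cases "Bad n \<delta> \<eta> x")
    case True thus ?thesis by simp
  next
    case nb: False
    show ?thesis
    proof (cases "PX A n x > 0")
      case False thus ?thesis using PX_zero[OF False] by simp
    next
      case True
      hence g: "good n \<delta> \<eta> x" using nb by (simp add: Bad_def)
      have h: "hbar A n (\<epsilon> + \<eta>) x \<le> hbar M n \<epsilon> x + real n * \<delta>" by (rule PL[OF True g e])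
      have h0: "hbar M n \<epsilon> x \<ge> 0" by (rule hbar_nonneg[OF PX_M_pos[OF True]]) (use e in auto)
      have "PX A n x * hbar A n (\<epsilon> + \<eta>) x \<le> PX A n x * hbar M n \<epsilon> x + PX A n x * (real n * \<delta>)"
        using h True by (simp add: distrib_left[symmetric] mult_left_mono)
      hence "ennreal (PX A n x * hbar A n (\<epsilon> + \<eta>) x) \<le> ennreal (PX A n x * hbar M n \<epsilon> x + PX A n x * (real n * \<delta>))"
        by (rule ennreal_leI)
      also have "\<dots> = ennreal (PX A n x * hbar M n \<epsilon> x) + ennreal (PX A n x) * ennreal (real n * \<delta>)"
        using True h0 d by (simp add: ennreal_plus ennreal_mult)
      finally show ?thesis by (simp add: add_increasing2)
    qed
  qed
  have "Hs_eps A (\<epsilon> + \<eta>) n \<le> (\<integral>\<^sup>+x. ennreal (PX A n x * hbar M n \<epsilon> x) + ennreal (PX A n x) * ennreal (real n * \<delta>)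
      + indicator {x. Bad n \<delta> \<eta> x} x * ennreal (PX A n x * hbar A n (\<epsilon> + \<eta>) x) \<partial>count_space UNIV)"
    unfolding Hs_eps_int[OF e'] by (intro nn_integral_mono pw)
  also have "\<dots> = G A M n \<epsilon> + ennreal (real n * \<delta>) +
     (\<integral>\<^sup>+x. indicator {x. Bad n \<delta> \<eta> x} x * ennreal (PX A n x * hbar A n (\<epsilon> + \<eta>) x) \<partial>count_space UNIV)"
    by (simp add: nn_integral_add nn_integral_multc PX_sum1 G_def)
  finally show ?thesis .
qed

end


lemma markov_sum:
  assumes e: "0 < \<epsilon>" "\<epsilon> < 1"
  shows "(\<integral>\<^sup>+x. indicator T x * ennreal (PX Q n x * hbar Q n \<epsilon> x) \<partial>count_space UNIV) \<le>
    ennreal (1/\<epsilon>) * (\<integral>\<^sup>+xy. indicator T (fst xy) * ennreal (LL Q n (fst xy) (snd xy)) \<partial>measure_pmf (Q n))"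
proof -
  have pw: "indicator T x * ennreal (PX Q n x * hbar Q n \<epsilon> x) \<le>
    ennreal (1/\<epsilon>) * (\<integral>\<^sup>+y. ennreal (pmf (Q n) (x,y)) * (indicator T x * ennreal (LL Q n x y)) \<partial>count_space UNIV)" for x
  proof (cases "PX Q n x > 0")
    case False thus ?thesis using PX_zero[OF False] by simp
  next
    case True
    have "indicator T x * ennreal (PX Q n x * hbar Q n \<epsilon> x) \<le> indicator T x * (ennreal (1/\<epsilon>) *
         (\<integral>\<^sup>+y. ennreal (pmf (Q n) (x,y)) * ennreal (LL Q n x y) \<partial>count_space UNIV))"
      by (intro mult_left_mono hbar_markov[OF True e]) simp
    also have "\<dots> = ennreal (1/\<epsilon>) * (indicator T x * (\<integral>\<^sup>+y. ennreal (pmf (Q n) (x,y)) * ennreal (LL Q n x y) \<partial>count_space UNIV))"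
      by (simp add: mult_ac)
    also have "\<dots> = ennreal (1/\<epsilon>) * (\<integral>\<^sup>+y. ennreal (pmf (Q n) (x,y)) * (indicator T x * ennreal (LL Q n x y)) \<partial>count_space UNIV)"
      by (subst nn_integral_cmult[symmetric]) (auto simp: mult_ac)
    finally show ?thesis .
  qed
  have "(\<integral>\<^sup>+x. indicator T x * ennreal (PX Q n x * hbar Q n \<epsilon> x) \<partial>count_space UNIV) \<le>
     (\<integral>\<^sup>+x. ennreal (1/\<epsilon>) * (\<integral>\<^sup>+y. ennreal (pmf (Q n) (x,y)) * (indicator T x * ennreal (LL Q n x y)) \<partial>count_space UNIV) \<partial>count_space UNIV)"
    by (intro nn_integral_mono pw)
  also have "\<dots> = ennreal (1/\<epsilon>) * (\<integral>\<^sup>+xy. indicator T (fst xy) * ennreal (LL Q n (fst xy) (snd xy)) \<partial>measure_pmf (Q n))"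
    by (simp add: nn_integral_cmult int_pair[where g="\<lambda>x y. indicator T x * ennreal (LL Q n x y)"])
  finally show ?thesis .
qed

definition Atyp :: "('a, 'b) source \<Rightarrow> ('a, 'c) source \<Rightarrow> nat \<Rightarrow> real \<Rightarrow> 'a list set" where
  "Atyp Q R n \<gamma> = {x. (1 / real n) * log 2 (PX Q n x / PX R n x) < \<gamma>}"

lemma typ_bound:
  assumes g: "\<gamma> > 0" and x: "x \<notin> Atyp Q R n \<gamma>" and r: "PX R n x > 0"
  shows "PX R n x \<le> 2 powr (-(real n * \<gamma>)) * PX Q n x"
proof -
  have h: "(1 / real n) * log 2 (PX Q n x / PX R n x) \<ge> \<gamma>" using x by (simp add: Atyp_def not_less)
  have n: "n > 0" using h g by (cases n) auto
  hence l: "log 2 (PX Q n x / PX R n x) \<ge> real n * \<gamma>" using h by (simp add: field_simps)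
  have rpos: "PX Q n x / PX R n x > 0"
  proof (rule ccontr)
    assume "\<not> PX Q n x / PX R n x > 0"
    hence z: "PX Q n x / PX R n x = 0" using PX_nonneg[of Q n x] r by (simp add: not_less divide_le_0_iff) 
    have "log 2 (PX Q n x / PX R n x) = 0" unfolding z by (simp add: log_def)
    moreover have "real n * \<gamma> > 0" using n g by simp
    ultimately show False using l by linarith
  qed
  have "2 powr (real n * \<gamma>) \<le> PX Q n x / PX R n x" using l rpos by (simp add: le_log_iff)
  hence "2 powr (real n * \<gamma>) * PX R n x \<le> PX Q n x" using r by (simp add: field_simps)
  hence "2 powr (-(real n * \<gamma>)) * (2 powr (real n * \<gamma>) * PX R n x) \<le> 2 powr (-(real n * \<gamma>)) * PX Q n x"
    by (intro mult_left_mono) auto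
  thus ?thesis by (simp add: powr_minus field_simps)
qed

context mixsrc begin

lemma WL:
  "(\<integral>\<^sup>+xy. indicator S xy * ennreal (LL M n (fst xy) (snd xy)) \<partial>measure_pmf (A n)) \<le>
   (\<integral>\<^sup>+xy. indicator S xy * ennreal (LL A n (fst xy) (snd xy)) \<partial>measure_pmf (A n)) + ennreal (1 / (a * ln 2))"
proof -
  define W where "W y = log 2 (PY M n y / (a * PY A n y))" for y
  have W0: "PY A n y > 0 \<Longrightarrow> W y \<ge> 0" for y
  proof -
    assume r: "PY A n y > 0"
    have "a * PY A n y \<le> PY M n y" using b_pos PY_nonneg[of B n y] by (simp add: PY_mix)
    hence "1 \<le> PY M n y / (a * PY A n y)" using r a_pos by (simp add: field_simps)
    thus "W y \<ge> 0" unfolding W_def by simp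
  qed
  have pw: "indicator S xy * ennreal (LL M n (fst xy) (snd xy)) \<le>
      indicator S xy * ennreal (LL A n (fst xy) (snd xy)) + ennreal (W (snd xy))"
    if xy: "xy \<in> set_pmf (A n)" for xy
  proof -
    obtain x y where xy_eq: "xy = (x,y)" by (cases xy)
    have p: "pmf (A n) (x,y) > 0" using xy xy_eq by (simp add: set_pmf_iff less_le)
    have pM: "pmf (M n) (x,y) \<ge> a * pmf (A n) (x,y)" using b_pos by (simp add: mix)
    have pMpos: "pmf (M n) (x,y) > 0" using pM p a_pos by (smt (verit) mult_pos_pos)
    have rApos: "PY A n y > 0" using pmf_le_PY[of A n x y] p by linarith
    have rMpos: "PY M n y > 0" using pmf_le_PY[of M n x y] pMpos by linarith
    have "LL M n x y = log 2 (PY M n y) - log 2 (pmf (M n) (x,y))" by (rule LL_pos_eq[of M n x y, OF pMpos])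
    also have "\<dots> \<le> log 2 (PY M n y) - log 2 (a * pmf (A n) (x,y))"
      using pM p a_pos rMpos by (intro diff_mono log_mono) auto
    also have "\<dots> = LL A n x y + W y"
      unfolding W_def LL_pos_eq[of A n x y, OF p] using a_pos p rApos rMpos
      by (simp add: log_mult log_divide)
    finally have "LL M n x y \<le> LL A n x y + W y" .
    hence "ennreal (LL M n x y) \<le> ennreal (LL A n x y) + ennreal (W y)"
      using LL_nonneg[of A n x y] W0[OF rApos] by (simp add: ennreal_plus[symmetric] ennreal_leI del: ennreal_plus)
    thus ?thesis unfolding xy_eq by (cases "(x,y) \<in> S") (auto simp: add_increasing)
  qed
  have Wint: "(\<integral>\<^sup>+xy. ennreal (W (snd xy)) \<partial>measure_pmf (A n)) \<le> ennreal (1 / (a * ln 2))"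
  proof -
    have "(\<integral>\<^sup>+xy. ennreal (W (snd xy)) \<partial>measure_pmf (A n)) = (\<integral>\<^sup>+y. ennreal (PY A n y) * ennreal (W y) \<partial>count_space UNIV)"
      unfolding PY_def by (rule int_snd[symmetric])
    also have "\<dots> \<le> (\<integral>\<^sup>+y. ennreal (1 / (a * ln 2)) * ennreal (PY M n y) \<partial>count_space UNIV)"
    proof (intro nn_integral_mono)
      fix y
      show "ennreal (PY A n y) * ennreal (W y) \<le> ennreal (1 / (a * ln 2)) * ennreal (PY M n y)"
      proof (cases "PY A n y > 0")
        case False thus ?thesis using PY_nonneg[of A n y] by (simp add: not_less)
      next
        case True
        define t where "t = PY M n y / (a * PY A n y)"
        have tpos: "t > 0" using True W0[OF True] a_pos PY_mix[of n y] b_pos PY_nonneg[of B n y]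
          by (simp add: t_def add_pos_nonneg)
        have "W y = ln t / ln 2" by (simp add: W_def t_def log_def)
        also have "\<dots> \<le> t / ln 2" using ln_le_minus_one[OF tpos] by (simp add: divide_right_mono)
        finally have "PY A n y * W y \<le> PY A n y * (t / ln 2)" using True by (intro mult_left_mono) auto
        also have "\<dots> = (1 / (a * ln 2)) * PY M n y" using True a_pos by (simp add: t_def field_simps)
        finally show ?thesis using True W0[OF True] a_pos PY_nonneg[of M n y]
          by (simp add: ennreal_mult[symmetric] ennreal_leI)
      qed
    qed
    also have "\<dots> = ennreal (1 / (a * ln 2))" by (simp add: nn_integral_cmult PY_def nn_integral_pmf_UNIV)
    finally show ?thesis .
  qed
  have "(\<integral>\<^sup>+xy. indicator S xy * ennreal (LL M n (fst xy) (snd xy)) \<partial>measure_pmf (A n)) \<le>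
       (\<integral>\<^sup>+xy. indicator S xy * ennreal (LL A n (fst xy) (snd xy)) + ennreal (W (snd xy)) \<partial>measure_pmf (A n))"
    by (intro nn_integral_mono_AE) (auto simp: AE_measure_pmf_iff intro: pw)
  also have "\<dots> = (\<integral>\<^sup>+xy. indicator S xy * ennreal (LL A n (fst xy) (snd xy)) \<partial>measure_pmf (A n)) +
       (\<integral>\<^sup>+xy. ennreal (W (snd xy)) \<partial>measure_pmf (A n))"
    by (simp add: nn_integral_add)
  finally show ?thesis using Wint by (meson add_left_mono order_trans)
qed


lemma BU_n:
  assumes e: "0 < \<epsilon>" "\<epsilon> < 1" and g: "\<gamma> > 0"
  shows "(\<integral>\<^sup>+x. indicator {x. Bad n \<delta> \<eta> x} x * ennreal (PX A n x * hbar M n \<epsilon> x) \<partial>count_space UNIV) \<le>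
    ennreal (1/\<epsilon>) * ((\<integral>\<^sup>+xy. indicator {xy. Bad n \<delta> \<eta> (fst xy)} xy * ennreal (LL M n (fst xy) (snd xy)) \<partial>measure_pmf (A n))
     + ennreal (2 powr (-(real n * \<gamma>))) * (\<integral>\<^sup>+xy. ennreal (LL M n (fst xy) (snd xy)) \<partial>measure_pmf (B n))
     + ennreal (b / a) * (\<integral>\<^sup>+xy. indicator {xy. fst xy \<in> Atyp B A n \<gamma>} xy * ennreal (LL M n (fst xy) (snd xy)) \<partial>measure_pmf (B n)))"
proof -
  define w where "w x = 2 powr (-(real n * \<gamma>)) + (b / a) * indicator (Atyp B A n \<gamma>) x" for x
  define I :: "'a list \<Rightarrow> ennreal" where "I x = indicator {x. Bad n \<delta> \<eta> x} x" for x
  have w0: "w x \<ge> 0" for x using a_pos b_pos by (simp add: w_def)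
  have pw: "I x * ennreal (PX A n x * hbar M n \<epsilon> x) \<le>
      ennreal (1/\<epsilon>) * ((\<integral>\<^sup>+y. ennreal (pmf (A n) (x,y)) * (I x * ennreal (LL M n x y)) \<partial>count_space UNIV) +
                     (\<integral>\<^sup>+y. ennreal (pmf (B n) (x,y)) * (ennreal (w x) * ennreal (LL M n x y)) \<partial>count_space UNIV))" for x
  proof (cases "PX A n x > 0 \<and> Bad n \<delta> \<eta> x")
    case False
    hence "I x * ennreal (PX A n x * hbar M n \<epsilon> x) = 0"
      using PX_zero[of A n x] by (auto simp: I_def Bad_def)
    thus ?thesis by (simp only: zero_le)
  next
    case True
    hence q: "PX A n x > 0" and I1: "I x = 1" by (auto simp: I_def)
    have qM: "PX M n x > 0" by (rule PX_M_pos[OF q])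
    have h0: "hbar M n \<epsilon> x \<ge> 0" by (rule hbar_nonneg[OF qM e])
    have key: "ennreal (PX A n x / PX M n x) * ennreal (pmf (M n) (x,y)) \<le> ennreal (pmf (A n) (x,y)) + ennreal (w x) * ennreal (pmf (B n) (x,y))" for y
    proof -
      have c1: "PX A n x / PX M n x * a \<le> 1"
        using qM q b_pos PX_nonneg[of B n x] by (simp add: PX_mix field_simps)
      have c2: "PX A n x / PX M n x * b \<le> w x"
      proof (cases "x \<in> Atyp B A n \<gamma>")
        case True
        have "PX A n x / PX M n x * b \<le> b / a"
          using qM q b_pos a_pos PX_nonneg[of B n x] by (simp add: PX_mix field_simps)
        moreover have "w x = 2 powr (-(real n * \<gamma>)) + b / a" using True by (simp add: w_def)
        moreover have "0 \<le> 2 powr (-(real n * \<gamma>))" by (rule powr_ge_zero)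
        ultimately show ?thesis by linarith
      next
        case False
        have t: "PX A n x \<le> 2 powr (-(real n * \<gamma>)) * PX B n x" by (rule typ_bound[OF g False q])
        have "PX A n x / PX M n x * b \<le> 2 powr (-(real n * \<gamma>))"
        proof -
          have "PX A n x * b \<le> 2 powr (-(real n * \<gamma>)) * (b * PX B n x)"
            using t b_pos by (simp add: mult_right_mono mult_ac)
          also have "\<dots> \<le> 2 powr (-(real n * \<gamma>)) * PX M n x"
            using a_pos PX_nonneg[of A n x] by (intro mult_left_mono) (auto simp: PX_mix)
          finally show ?thesis using qM by (simp add: field_simps)
        qed
        thus ?thesis using False by (simp add: w_def)
      qed
      have "PX A n x / PX M n x * pmf (M n) (x,y) = (PX A n x / PX M n x * a) * pmf (A n) (x,y) + (PX A n x / PX M n x * b) * pmf (B n) (x,y)"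
        by (simp add: mix algebra_simps)
      also have "\<dots> \<le> 1 * pmf (A n) (x,y) + w x * pmf (B n) (x,y)"
        using c1 c2 by (intro add_mono mult_right_mono) auto
      finally have "PX A n x / PX M n x * pmf (M n) (x,y) \<le> pmf (A n) (x,y) + w x * pmf (B n) (x,y)" by simp
      hence "ennreal (PX A n x / PX M n x * pmf (M n) (x,y)) \<le> ennreal (pmf (A n) (x,y) + w x * pmf (B n) (x,y))"
        by (rule ennreal_leI)
      moreover have "ennreal (PX A n x / PX M n x * pmf (M n) (x,y)) = ennreal (PX A n x / PX M n x) * ennreal (pmf (M n) (x,y))"
        using qM q by (intro ennreal_mult) auto
      moreover have "ennreal (pmf (A n) (x,y) + w x * pmf (B n) (x,y)) = ennreal (pmf (A n) (x,y)) + ennreal (w x) * ennreal (pmf (B n) (x,y))"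
        using w0[of x] by (simp add: ennreal_mult ennreal_plus)
      ultimately show ?thesis by simp
    qed
    have "ennreal (PX A n x * hbar M n \<epsilon> x) = ennreal (PX A n x / PX M n x) * ennreal (PX M n x * hbar M n \<epsilon> x)"
      using qM q h0 by (simp add: ennreal_mult[symmetric])
    also have "\<dots> \<le> ennreal (PX A n x / PX M n x) * (ennreal (1/\<epsilon>) * (\<integral>\<^sup>+y. ennreal (pmf (M n) (x,y)) * ennreal (LL M n x y) \<partial>count_space UNIV))"
      by (intro mult_left_mono hbar_markov[OF qM e]) simp
    also have "\<dots> = ennreal (1/\<epsilon>) * (ennreal (PX A n x / PX M n x) * (\<integral>\<^sup>+y. ennreal (pmf (M n) (x,y)) * ennreal (LL M n x y) \<partial>count_space UNIV))"
      by (simp add: mult_ac)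
    also have "\<dots> = ennreal (1/\<epsilon>) * (\<integral>\<^sup>+y. (ennreal (PX A n x / PX M n x) * ennreal (pmf (M n) (x,y))) * ennreal (LL M n x y) \<partial>count_space UNIV)"
      by (subst nn_integral_cmult[symmetric]) (auto simp: mult.assoc)
    also have "\<dots> \<le> ennreal (1/\<epsilon>) * (\<integral>\<^sup>+y. (ennreal (pmf (A n) (x,y)) + ennreal (w x) * ennreal (pmf (B n) (x,y))) * ennreal (LL M n x y) \<partial>count_space UNIV)"
      by (intro mult_left_mono nn_integral_mono mult_right_mono key) auto
    also have "\<dots> = ennreal (1/\<epsilon>) * ((\<integral>\<^sup>+y. ennreal (pmf (A n) (x,y)) * (I x * ennreal (LL M n x y)) \<partial>count_space UNIV) +
                     (\<integral>\<^sup>+y. ennreal (pmf (B n) (x,y)) * (ennreal (w x) * ennreal (LL M n x y)) \<partial>count_space UNIV))"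
    proof -
      have "(\<integral>\<^sup>+y. (ennreal (pmf (A n) (x,y)) + ennreal (w x) * ennreal (pmf (B n) (x,y))) * ennreal (LL M n x y) \<partial>count_space UNIV)
          = (\<integral>\<^sup>+y. ennreal (pmf (A n) (x,y)) * (I x * ennreal (LL M n x y)) + ennreal (pmf (B n) (x,y)) * (ennreal (w x) * ennreal (LL M n x y)) \<partial>count_space UNIV)"
        by (intro nn_integral_cong) (simp add: I1 distrib_right distrib_left mult_ac)
      also have "\<dots> = (\<integral>\<^sup>+y. ennreal (pmf (A n) (x,y)) * (I x * ennreal (LL M n x y)) \<partial>count_space UNIV) +
                     (\<integral>\<^sup>+y. ennreal (pmf (B n) (x,y)) * (ennreal (w x) * ennreal (LL M n x y)) \<partial>count_space UNIV)"
        by (rule nn_integral_add) auto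
      finally show ?thesis by simp
    qed
    finally show ?thesis using I1 by simp
  qed
  have "(\<integral>\<^sup>+x. indicator {x. Bad n \<delta> \<eta> x} x * ennreal (PX A n x * hbar M n \<epsilon> x) \<partial>count_space UNIV) \<le>
     (\<integral>\<^sup>+x. ennreal (1/\<epsilon>) * ((\<integral>\<^sup>+y. ennreal (pmf (A n) (x,y)) * (I x * ennreal (LL M n x y)) \<partial>count_space UNIV) +
                     (\<integral>\<^sup>+y. ennreal (pmf (B n) (x,y)) * (ennreal (w x) * ennreal (LL M n x y)) \<partial>count_space UNIV)) \<partial>count_space UNIV)"
    unfolding I_def[symmetric] by (intro nn_integral_mono pw)
  also have "\<dots> = ennreal (1/\<epsilon>) * ((\<integral>\<^sup>+xy. I (fst xy) * ennreal (LL M n (fst xy) (snd xy)) \<partial>measure_pmf (A n)) +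
      (\<integral>\<^sup>+xy. ennreal (w (fst xy)) * ennreal (LL M n (fst xy) (snd xy)) \<partial>measure_pmf (B n)))"
    by (simp add: nn_integral_cmult nn_integral_add int_pair[where g="\<lambda>x y. I x * ennreal (LL M n x y)"]
          int_pair[where g="\<lambda>x y. ennreal (w x) * ennreal (LL M n x y)"])
  also have "(\<integral>\<^sup>+xy. ennreal (w (fst xy)) * ennreal (LL M n (fst xy) (snd xy)) \<partial>measure_pmf (B n)) =
     ennreal (2 powr (-(real n * \<gamma>))) * (\<integral>\<^sup>+xy. ennreal (LL M n (fst xy) (snd xy)) \<partial>measure_pmf (B n))
     + ennreal (b / a) * (\<integral>\<^sup>+xy. indicator {xy. fst xy \<in> Atyp B A n \<gamma>} xy * ennreal (LL M n (fst xy) (snd xy)) \<partial>measure_pmf (B n))"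
  proof -
    have "ennreal (w x) = ennreal (2 powr (-(real n * \<gamma>))) + ennreal (b / a) * indicator (Atyp B A n \<gamma>) x" for x
      using a_pos b_pos by (simp add: w_def ennreal_plus ennreal_mult indicator_def)
    hence "(\<integral>\<^sup>+xy. ennreal (w (fst xy)) * ennreal (LL M n (fst xy) (snd xy)) \<partial>measure_pmf (B n)) =
        (\<integral>\<^sup>+xy. ennreal (2 powr (-(real n * \<gamma>))) * ennreal (LL M n (fst xy) (snd xy)) +
                ennreal (b / a) * (indicator {xy. fst xy \<in> Atyp B A n \<gamma>} xy * ennreal (LL M n (fst xy) (snd xy))) \<partial>measure_pmf (B n))"
      by (intro nn_integral_cong) (auto simp: distrib_right distrib_left indicator_def mult_ac)
    also have "\<dots> = ennreal (2 powr (-(real n * \<gamma>))) * (\<integral>\<^sup>+xy. ennreal (LL M n (fst xy) (snd xy)) \<partial>measure_pmf (B n))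
     + ennreal (b / a) * (\<integral>\<^sup>+xy. indicator {xy. fst xy \<in> Atyp B A n \<gamma>} xy * ennreal (LL M n (fst xy) (snd xy)) \<partial>measure_pmf (B n))"
      by (simp add: nn_integral_add nn_integral_cmult)
    finally show ?thesis .
  qed
  also have "(\<integral>\<^sup>+xy. I (fst xy) * ennreal (LL M n (fst xy) (snd xy)) \<partial>measure_pmf (A n)) =
      (\<integral>\<^sup>+xy. indicator {xy. Bad n \<delta> \<eta> (fst xy)} xy * ennreal (LL M n (fst xy) (snd xy)) \<partial>measure_pmf (A n))"
    by (intro nn_integral_cong) (simp add: I_def indicator_def)
  finally show ?thesis by (simp add: add.assoc)
qed

end


definition small :: "(nat \<Rightarrow> ennreal) \<Rightarrow> bool" where
  "small f \<longleftrightarrow> (\<forall>\<zeta>>0. eventually (\<lambda>n. f n \<le> ennreal (real n * \<zeta>)) sequentially)"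

lemma smallD: "small f \<Longrightarrow> \<zeta> > 0 \<Longrightarrow> eventually (\<lambda>n. f n \<le> ennreal (real n * \<zeta>)) sequentially"
  by (simp add: small_def)

lemma small_add: assumes "small f" "small g" shows "small (\<lambda>n. f n + g n)"
  unfolding small_def
proof (intro allI impI)
  fix \<zeta> :: real assume z: "\<zeta> > 0"
  have "eventually (\<lambda>n. f n \<le> ennreal (real n * (\<zeta>/2)) \<and> g n \<le> ennreal (real n * (\<zeta>/2))) sequentially"
    using smallD[OF assms(1), of "\<zeta>/2"] smallD[OF assms(2), of "\<zeta>/2"] z by (auto intro: eventually_conj)
  thus "eventually (\<lambda>n. f n + g n \<le> ennreal (real n * \<zeta>)) sequentially"
  proof (rule eventually_mono)
    fix n assume "f n \<le> ennreal (real n * (\<zeta>/2)) \<and> g n \<le> ennreal (real n * (\<zeta>/2))"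
    hence "f n + g n \<le> ennreal (real n * (\<zeta>/2)) + ennreal (real n * (\<zeta>/2))" by (intro add_mono) auto
    also have "\<dots> = ennreal (real n * \<zeta>)" using z by (simp add: ennreal_plus[symmetric] del: ennreal_plus)
    finally show "f n + g n \<le> ennreal (real n * \<zeta>)" .
  qed
qed

lemma small_cmult: assumes "small f" "c \<ge> 0" shows "small (\<lambda>n. ennreal c * f n)"
  unfolding small_def
proof (intro allI impI)
  fix \<zeta> :: real assume z: "\<zeta> > 0"
  have "eventually (\<lambda>n. f n \<le> ennreal (real n * (\<zeta>/(c+1)))) sequentially"
    using smallD[OF assms(1), of "\<zeta>/(c+1)"] z assms(2) by auto
  thus "eventually (\<lambda>n. ennreal c * f n \<le> ennreal (real n * \<zeta>)) sequentially"
  proof (rule eventually_mono)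
    fix n assume h: "f n \<le> ennreal (real n * (\<zeta>/(c+1)))"
    have "ennreal c * f n \<le> ennreal c * ennreal (real n * (\<zeta>/(c+1)))" by (intro mult_left_mono h) auto
    also have "\<dots> = ennreal (c * (real n * (\<zeta>/(c+1))))" using assms z by (subst ennreal_mult) auto
    also have "\<dots> \<le> ennreal (real n * \<zeta>)"
    proof (rule ennreal_leI)
      have "c / (c+1) \<le> 1" using assms by simp
      hence "(real n * \<zeta>) * (c / (c+1)) \<le> (real n * \<zeta>) * 1" using z by (intro mult_left_mono) auto
      thus "c * (real n * (\<zeta>/(c+1))) \<le> real n * \<zeta>" by (simp add: field_simps)
    qed
    finally show "ennreal c * f n \<le> ennreal (real n * \<zeta>)" .
  qed
qed

lemma small_mono: assumes "small f" "eventually (\<lambda>n. g n \<le> f n) sequentially" shows "small g"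
  unfolding small_def
proof (intro allI impI)
  fix \<zeta> :: real assume z: "\<zeta> > 0"
  show "eventually (\<lambda>n. g n \<le> ennreal (real n * \<zeta>)) sequentially"
    using eventually_conj[OF smallD[OF assms(1) z] assms(2)] by (rule eventually_mono) auto
qed

lemma small_const: "small (\<lambda>n. ennreal K)"
  unfolding small_def
proof (intro allI impI)
  fix \<zeta> :: real assume z: "\<zeta> > 0"
  obtain N :: nat where N: "K / \<zeta> < real N" using reals_Archimedean2 by blast
  show "eventually (\<lambda>n. ennreal K \<le> ennreal (real n * \<zeta>)) sequentially"
    unfolding eventually_sequentially
  proof (intro exI[of _ N] allI impI ennreal_leI)
    fix n assume "N \<le> n"
    hence "K / \<zeta> < real n" using N by linarith
    thus "K \<le> real n * \<zeta>" using z by (simp add: field_simps)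
  qed
qed

lemma ui_small:
  assumes ui: "uniformly_integrable Q" and S: "(\<lambda>n. measure (measure_pmf (Q n)) (S n)) \<longlonglongrightarrow> 0"
  shows "small (\<lambda>n. \<integral>\<^sup>+xy. indicator (S n) xy * ennreal (LL Q n (fst xy) (snd xy)) \<partial>measure_pmf (Q n))"
  unfolding small_def
proof (intro allI impI)
  fix \<zeta> :: real assume z: "\<zeta> > 0"
  obtain u where u: "u > 0" and bnd: "\<And>n S. n \<ge> 1 \<Longrightarrow> (\<integral>\<^sup>+xy. indicator S xy * ennreal (LL Q n (fst xy) (snd xy)) \<partial>measure_pmf (Q n))
            \<le> ennreal (real n) * (ennreal u * emeasure (measure_pmf (Q n)) S + ennreal (\<zeta>/2))"
    using ui_bound[OF ui, of "\<zeta>/2"] z by auto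
  have "eventually (\<lambda>n. measure (measure_pmf (Q n)) (S n) < \<zeta> / (2*u)) sequentially"
    using S z u by (intro order_tendstoD(2)) auto
  moreover have "eventually (\<lambda>n. n \<ge> 1) sequentially" by (rule eventually_ge_at_top)
  ultimately show "eventually (\<lambda>n. (\<integral>\<^sup>+xy. indicator (S n) xy * ennreal (LL Q n (fst xy) (snd xy)) \<partial>measure_pmf (Q n)) \<le> ennreal (real n * \<zeta>)) sequentially"
  proof (eventually_elim)
    case (elim n)
    have m: "measure (measure_pmf (Q n)) (S n) \<ge> 0" by simp
    have "(\<integral>\<^sup>+xy. indicator (S n) xy * ennreal (LL Q n (fst xy) (snd xy)) \<partial>measure_pmf (Q n))
        \<le> ennreal (real n) * (ennreal u * ennreal (measure (measure_pmf (Q n)) (S n)) + ennreal (\<zeta>/2))"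
      using bnd[OF elim(2), of "S n"] by (simp add: measure_pmf.emeasure_eq_measure)
    also have "\<dots> = ennreal (real n * (u * measure (measure_pmf (Q n)) (S n) + \<zeta>/2))"
      using u z m by (simp add: ennreal_mult ennreal_plus)
    also have "\<dots> \<le> ennreal (real n * \<zeta>)"
    proof (rule ennreal_leI)
      have "u * measure (measure_pmf (Q n)) (S n) \<le> u * (\<zeta> / (2*u))" using elim(1) u by (intro mult_left_mono) auto
      hence "u * measure (measure_pmf (Q n)) (S n) + \<zeta>/2 \<le> \<zeta>" using u by simp
      thus "real n * (u * measure (measure_pmf (Q n)) (S n) + \<zeta>/2) \<le> real n * \<zeta>" by (intro mult_left_mono) auto
    qed
    finally show ?case .
  qed
qed

lemma ui_bounded:
  assumes ui: "uniformly_integrable Q"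
  shows "\<exists>C\<ge>0. \<forall>n\<ge>1. (\<integral>\<^sup>+xy. ennreal (LL Q n (fst xy) (snd xy)) \<partial>measure_pmf (Q n)) \<le> ennreal (real n * C)"
proof -
  obtain u where u: "u > 0" and bnd: "\<And>n S. n \<ge> 1 \<Longrightarrow> (\<integral>\<^sup>+xy. indicator S xy * ennreal (LL Q n (fst xy) (snd xy)) \<partial>measure_pmf (Q n))
            \<le> ennreal (real n) * (ennreal u * emeasure (measure_pmf (Q n)) S + ennreal 1)"
    using ui_bound[OF ui, of 1] by auto
  show ?thesis
  proof (intro exI[of _ "u + 1"] conjI allI impI)
    fix n :: nat assume n: "n \<ge> 1"
    have "(\<integral>\<^sup>+xy. ennreal (LL Q n (fst xy) (snd xy)) \<partial>measure_pmf (Q n)) \<le> ennreal (real n) * (ennreal u * 1 + ennreal 1)"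
      using bnd[OF n, of UNIV] by simp
    also have "\<dots> = ennreal (real n * (u + 1))" using u by (simp add: ennreal_mult ennreal_plus)
    finally show "(\<integral>\<^sup>+xy. ennreal (LL Q n (fst xy) (snd xy)) \<partial>measure_pmf (Q n)) \<le> ennreal (real n * (u + 1))" .
  qed (use u in auto)
qed

lemma powr_neg_tendsto: "\<gamma> > 0 \<Longrightarrow> (\<lambda>n. 2 powr (-(real n * \<gamma>))) \<longlonglongrightarrow> 0"
proof -
  assume g: "\<gamma> > 0"
  have eq: "2 powr (-(real n * \<gamma>)) = (2 powr (-\<gamma>)) ^ n" for n
    by (simp add: powr_realpow[symmetric] powr_powr mult.commute)
  have "(2::real) powr (-\<gamma>) < 1" using g by (simp add: powr_less_one)
  hence "(\<lambda>n. (2 powr (-\<gamma>)) ^ n) \<longlonglongrightarrow> 0" by (intro LIMSEQ_realpow_zero) auto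
  thus ?thesis by (simp add: eq)
qed

lemma small_exp:
  assumes ui: "uniformly_integrable Q" and g: "\<gamma> > 0"
  shows "small (\<lambda>n. ennreal (2 powr (-(real n * \<gamma>))) * (\<integral>\<^sup>+xy. ennreal (LL Q n (fst xy) (snd xy)) \<partial>measure_pmf (Q n)))"
  unfolding small_def
proof (intro allI impI)
  fix \<zeta> :: real assume z: "\<zeta> > 0"
  obtain C where C: "C \<ge> 0" "\<And>n. n \<ge> 1 \<Longrightarrow> (\<integral>\<^sup>+xy. ennreal (LL Q n (fst xy) (snd xy)) \<partial>measure_pmf (Q n)) \<le> ennreal (real n * C)"
    using ui_bounded[OF ui] by auto
  have "eventually (\<lambda>n. 2 powr (-(real n * \<gamma>)) < \<zeta> / (C + 1)) sequentially"
    using powr_neg_tendsto[OF g] z C by (intro order_tendstoD(2)) auto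
  moreover have "eventually (\<lambda>n. n \<ge> 1) sequentially" by (rule eventually_ge_at_top)
  ultimately show "eventually (\<lambda>n. ennreal (2 powr (-(real n * \<gamma>))) * (\<integral>\<^sup>+xy. ennreal (LL Q n (fst xy) (snd xy)) \<partial>measure_pmf (Q n)) \<le> ennreal (real n * \<zeta>)) sequentially"
  proof eventually_elim
    case (elim n)
    have "ennreal (2 powr (-(real n * \<gamma>))) * (\<integral>\<^sup>+xy. ennreal (LL Q n (fst xy) (snd xy)) \<partial>measure_pmf (Q n))
       \<le> ennreal (2 powr (-(real n * \<gamma>))) * ennreal (real n * C)" by (intro mult_left_mono C(2) elim(2)) auto
    also have "\<dots> = ennreal (2 powr (-(real n * \<gamma>)) * (real n * C))" using C by (simp add: ennreal_mult)
    also have "\<dots> \<le> ennreal (real n * \<zeta>)"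
    proof (rule ennreal_leI)
      have "2 powr (-(real n * \<gamma>)) * C \<le> \<zeta> / (C + 1) * C" using elim(1) C by (intro mult_right_mono) auto
      also have "\<dots> \<le> \<zeta>" using z C by (simp add: field_simps)
      finally have "2 powr (-(real n * \<gamma>)) * C \<le> \<zeta>" .
      hence "real n * (2 powr (-(real n * \<gamma>)) * C) \<le> real n * \<zeta>" by (intro mult_left_mono) auto
      thus "2 powr (-(real n * \<gamma>)) * (real n * C) \<le> real n * \<zeta>" by (simp add: mult_ac)
    qed
    finally show ?case .
  qed
qed

lemma D_pos:
  assumes "D_lower Q R > 0"
  shows "\<exists>\<gamma>>0. (\<lambda>n. measure (measure_pmf (map_pmf fst (Q n))) (Atyp Q R n \<gamma>)) \<longlonglongrightarrow> 0"
proof -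
  from assms obtain s where s: "s \<in> {ereal \<beta> | \<beta>.
     (\<lambda>n. measure_pmf.prob (map_pmf fst (Q n))
            {x. (1 / real n) * log 2 (PX Q n x / PX R n x) < \<beta>}) \<longlonglongrightarrow> 0}" "0 < s"
    unfolding D_lower_def by (auto simp: less_Sup_iff)
  then obtain \<beta> where "s = ereal \<beta>" "(\<lambda>n. measure_pmf.prob (map_pmf fst (Q n))
            {x. (1 / real n) * log 2 (PX Q n x / PX R n x) < \<beta>}) \<longlonglongrightarrow> 0" by auto
  thus ?thesis using s(2) by (intro exI[of _ \<beta>]) (auto simp: Atyp_def)
qed


context mixsrc begin

lemma mA_int:
  assumes d: "\<delta> \<ge> 0"
  shows "(\<integral>\<^sup>+x. mA n \<delta> x \<partial>count_space UNIV) \<le> ennreal (2 / (a * 2 powr (real n * \<delta>)))"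
proof -
  let ?t = "a * 2 powr (real n * \<delta>)"
  have tpos: "?t > 0" using a_pos by simp
  have "(\<integral>\<^sup>+x. mA n \<delta> x \<partial>count_space UNIV) = (\<integral>\<^sup>+xy. indicator (EA n \<delta> (fst xy)) (snd xy) \<partial>measure_pmf (A n))"
    unfolding mA_def by (rule int_pair[where g="\<lambda>x y. indicator (EA n \<delta> x) y"])
  also have "\<dots> \<le> (\<integral>\<^sup>+xy. indicator {y. ?t * PY A n y < PY M n y} (snd xy) + indicator {xy. ?t * pmf (A n) xy < pmf (M n) xy} xy \<partial>measure_pmf (A n))"
    by (intro nn_integral_mono) (auto simp: EA_def indicator_def mult.assoc)
  also have "\<dots> = (\<integral>\<^sup>+xy. indicator {y. ?t * PY A n y < PY M n y} (snd xy) \<partial>measure_pmf (A n)) +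
     (\<integral>\<^sup>+xy. indicator {xy. ?t * pmf (A n) xy < pmf (M n) xy} xy \<partial>measure_pmf (A n))"
    by (rule nn_integral_add) auto
  also have "(\<integral>\<^sup>+xy. indicator {y. ?t * PY A n y < PY M n y} (snd xy) \<partial>measure_pmf (A n)) \<le> ennreal (1 / ?t)"
  proof -
    have "(\<integral>\<^sup>+xy. indicator {y. ?t * PY A n y < PY M n y} (snd xy) \<partial>measure_pmf (A n)) =
        (\<integral>\<^sup>+y. ennreal (PY A n y) * indicator {y. ?t * PY A n y < PY M n y} y \<partial>count_space UNIV)"
      unfolding PY_def by (rule int_snd[symmetric])
    also have "\<dots> \<le> (\<integral>\<^sup>+y. ennreal (1 / ?t) * ennreal (PY M n y) \<partial>count_space UNIV)"
    proof (intro nn_integral_mono)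
      fix y
      show "ennreal (PY A n y) * indicator {y. ?t * PY A n y < PY M n y} y \<le> ennreal (1 / ?t) * ennreal (PY M n y)"
      proof (cases "?t * PY A n y < PY M n y")
        case True
        hence "PY A n y \<le> 1 / ?t * PY M n y" using tpos by (simp add: field_simps)
        hence "ennreal (PY A n y) \<le> ennreal (1 / ?t * PY M n y)" by (rule ennreal_leI)
        also have "\<dots> = ennreal (1 / ?t) * ennreal (PY M n y)" by (rule ennreal_mult) (use tpos PY_nonneg[of M n y] in auto)
        finally show ?thesis using True by simp
      qed simp
    qed
    also have "\<dots> = ennreal (1 / ?t)" by (simp add: nn_integral_cmult PY_def nn_integral_pmf_UNIV)
    finally show ?thesis .
  qed
  also have "(\<integral>\<^sup>+xy. indicator {xy. ?t * pmf (A n) xy < pmf (M n) xy} xy \<partial>measure_pmf (A n)) \<le> ennreal (1 / ?t)"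
  proof -
    have "(\<integral>\<^sup>+xy. indicator {xy. ?t * pmf (A n) xy < pmf (M n) xy} xy \<partial>measure_pmf (A n)) =
       (\<integral>\<^sup>+xy. ennreal (pmf (A n) xy) * indicator {xy. ?t * pmf (A n) xy < pmf (M n) xy} xy \<partial>count_space UNIV)"
      by (rule nn_integral_measure_pmf)
    also have "\<dots> \<le> (\<integral>\<^sup>+xy. ennreal (1 / ?t) * ennreal (pmf (M n) xy) \<partial>count_space UNIV)"
    proof (intro nn_integral_mono)
      fix xy
      show "ennreal (pmf (A n) xy) * indicator {xy. ?t * pmf (A n) xy < pmf (M n) xy} xy \<le> ennreal (1 / ?t) * ennreal (pmf (M n) xy)"
      proof (cases "?t * pmf (A n) xy < pmf (M n) xy")
        case True
        hence "pmf (A n) xy \<le> 1 / ?t * pmf (M n) xy" using tpos by (simp add: field_simps)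
        hence "ennreal (pmf (A n) xy) \<le> ennreal (1 / ?t * pmf (M n) xy)" by (rule ennreal_leI)
        also have "\<dots> = ennreal (1 / ?t) * ennreal (pmf (M n) xy)" by (rule ennreal_mult) (use tpos in auto)
        finally show ?thesis using True by simp
      qed simp
    qed
    also have "\<dots> = ennreal (1 / ?t)" by (simp add: nn_integral_cmult nn_integral_pmf_UNIV)
    finally show ?thesis .
  qed
  finally have "(\<integral>\<^sup>+x. mA n \<delta> x \<partial>count_space UNIV) \<le> ennreal (1 / ?t) + ennreal (1 / ?t)"
    by (simp add: add_mono)
  also have "\<dots> = ennreal (2 / ?t)" using tpos by (simp add: ennreal_plus[symmetric] del: ennreal_plus)
  finally show ?thesis .
qed

lemma Mk_bound:
  assumes d: "\<delta> \<ge> 0" and e: "\<eta> > 0"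
  shows "measure (measure_pmf (map_pmf fst (A n))) {x. PX A n x > 0 \<and> \<eta> * PX A n x < 2 * enn2real (mA n \<delta> x)}
     \<le> 4 / (\<eta> * a * 2 powr (real n * \<delta>))"
proof -
  let ?Mk = "{x. PX A n x > 0 \<and> \<eta> * PX A n x < 2 * enn2real (mA n \<delta> x)}"
  have "emeasure (measure_pmf (map_pmf fst (A n))) ?Mk = (\<integral>\<^sup>+x. indicator ?Mk x \<partial>measure_pmf (map_pmf fst (A n)))"
    by (rule nn_integral_indicator[symmetric]) simp
  also have "\<dots> = (\<integral>\<^sup>+x. ennreal (PX A n x) * indicator ?Mk x \<partial>count_space UNIV)"
    unfolding PX_def by (rule nn_integral_measure_pmf)
  also have "\<dots> \<le> (\<integral>\<^sup>+x. ennreal (2/\<eta>) * mA n \<delta> x \<partial>count_space UNIV)"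
  proof (intro nn_integral_mono)
    fix x
    show "ennreal (PX A n x) * indicator ?Mk x \<le> ennreal (2/\<eta>) * mA n \<delta> x"
    proof (cases "x \<in> ?Mk")
      case True
      hence "PX A n x \<le> 2/\<eta> * enn2real (mA n \<delta> x)" using e by (simp add: field_simps)
      hence "ennreal (PX A n x) \<le> ennreal (2/\<eta> * enn2real (mA n \<delta> x))" by (rule ennreal_leI)
      also have "\<dots> = ennreal (2/\<eta>) * mA n \<delta> x" using e by (subst ennreal_mult) (auto simp: mA_eq[symmetric])
      finally show ?thesis using True by simp
    qed simp
  qed
  also have "\<dots> = ennreal (2/\<eta>) * (\<integral>\<^sup>+x. mA n \<delta> x \<partial>count_space UNIV)" by (simp add: nn_integral_cmult)
  also have "\<dots> \<le> ennreal (2/\<eta>) * ennreal (2 / (a * 2 powr (real n * \<delta>)))" by (intro mult_left_mono mA_int d) auto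
  also have "\<dots> = ennreal (4 / (\<eta> * a * 2 powr (real n * \<delta>)))" using e a_pos by (simp add: ennreal_mult[symmetric])
  finally show ?thesis using e a_pos by (simp add: measure_pmf.emeasure_eq_measure)
qed

lemma Bad_sub:
  assumes g: "\<gamma> > 0" and e: "\<eta> > 0" and n1: "b * 2 powr (-(real n * \<gamma>)) \<le> a" and n2: "4 * b * 2 powr (-(real n * \<gamma>)) \<le> a * \<eta>"
  shows "{x. Bad n \<delta> \<eta> x} \<subseteq> Atyp A B n \<gamma> \<union> {x. PX A n x > 0 \<and> \<eta> * PX A n x < 2 * enn2real (mA n \<delta> x)}"
proof
  fix x assume x: "x \<in> {x. Bad n \<delta> \<eta> x}"
  hence q: "PX A n x > 0" and ng: "\<not> good n \<delta> \<eta> x" by (auto simp: Bad_def)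
  show "x \<in> Atyp A B n \<gamma> \<union> {x. PX A n x > 0 \<and> \<eta> * PX A n x < 2 * enn2real (mA n \<delta> x)}"
  proof (rule ccontr)
    assume "x \<notin> Atyp A B n \<gamma> \<union> {x. PX A n x > 0 \<and> \<eta> * PX A n x < 2 * enn2real (mA n \<delta> x)}"
    hence na: "x \<notin> Atyp A B n \<gamma>" and m: "2 * enn2real (mA n \<delta> x) \<le> \<eta> * PX A n x" using q by auto
    have qM: "PX M n x > 0" by (rule PX_M_pos[OF q])
    have m0: "enn2real (mA n \<delta> x) \<ge> 0" by simp
    let ?p = "2 powr (-(real n * \<gamma>))"
    have qB: "PX B n x \<le> ?p * PX A n x"
    proof (cases "PX B n x > 0")
      case True thus ?thesis by (rule typ_bound[OF g na])
    next
      case False thus ?thesis using PX_zero[OF False] q by simp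
    qed
    have c1: "b * PX B n x \<le> a * PX A n x"
    proof -
      have "b * PX B n x \<le> b * (?p * PX A n x)" using qB b_pos by (intro mult_left_mono) auto
      also have "\<dots> = (b * ?p) * PX A n x" by (simp add: mult_ac)
      also have "\<dots> \<le> a * PX A n x" using n1 q by (intro mult_right_mono) auto
      finally show ?thesis .
    qed
    have c2: "2 * (b * PX B n x / PX M n x) * PX A n x \<le> 2 * (\<eta> / 4) * PX A n x"
    proof -
      have "a * PX A n x \<le> PX M n x" using b_pos PX_nonneg[of B n x] by (simp add: PX_mix)
      have "b * PX B n x / PX M n x \<le> b * PX B n x / (a * PX A n x)"
        using \<open>a * PX A n x \<le> PX M n x\<close> q a_pos b_pos PX_nonneg[of B n x] qM
        by (intro divide_left_mono) auto
      also have "\<dots> \<le> b * (?p * PX A n x) / (a * PX A n x)"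
        using qB b_pos a_pos q by (intro divide_right_mono mult_left_mono) auto
      also have "\<dots> = b * ?p / a" using q a_pos by (simp add: field_simps)
      also have "\<dots> \<le> \<eta> / 4" using n2 a_pos by (simp add: field_simps)
      finally have "b * PX B n x / PX M n x \<le> \<eta> / 4" .
      thus ?thesis using q by (intro mult_right_mono mult_left_mono) auto
    qed
    have "good n \<delta> \<eta> x" unfolding good_def using c1 c2 m by linarith
    thus False using ng by simp
  qed
qed

lemma Bad_prob:
  assumes D: "D_lower A B > 0" and d: "\<delta> > 0" and e: "\<eta> > 0"
  shows "(\<lambda>n. measure (measure_pmf (map_pmf fst (A n))) {x. Bad n \<delta> \<eta> x}) \<longlonglongrightarrow> 0"
proof -
  obtain \<gamma> where g: "\<gamma> > 0" and At: "(\<lambda>n. measure (measure_pmf (map_pmf fst (A n))) (Atyp A B n \<gamma>)) \<longlonglongrightarrow> 0"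
    using D_pos[OF D] by auto
  have ev1: "eventually (\<lambda>n. b * 2 powr (-(real n * \<gamma>)) \<le> a \<and> 4 * b * 2 powr (-(real n * \<gamma>)) \<le> a * \<eta>) sequentially"
  proof -
    have "(\<lambda>n. 4 * b * 2 powr (-(real n * \<gamma>))) \<longlonglongrightarrow> 4 * b * 0" by (intro tendsto_mult tendsto_const powr_neg_tendsto g)
    hence "eventually (\<lambda>n. 4 * b * 2 powr (-(real n * \<gamma>)) < min a (a * \<eta>)) sequentially"
      using a_pos e by (intro order_tendstoD(2)) auto
    thus ?thesis
    proof (rule eventually_mono)
      fix n assume h: "4 * b * 2 powr (-(real n * \<gamma>)) < min a (a * \<eta>)"
      have "b * 2 powr (-(real n * \<gamma>)) \<le> 4 * b * 2 powr (-(real n * \<gamma>))" using b_pos by simp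
      thus "b * 2 powr (-(real n * \<gamma>)) \<le> a \<and> 4 * b * 2 powr (-(real n * \<gamma>)) \<le> a * \<eta>" using h by linarith
    qed
  qed
  have R: "(\<lambda>n. measure (measure_pmf (map_pmf fst (A n))) (Atyp A B n \<gamma>) + 4 / (\<eta> * a) * 2 powr (-(real n * \<delta>))) \<longlonglongrightarrow> 0 + 4 / (\<eta> * a) * 0"
    by (intro tendsto_add tendsto_mult At tendsto_const powr_neg_tendsto d)
  hence R': "(\<lambda>n. measure (measure_pmf (map_pmf fst (A n))) (Atyp A B n \<gamma>) + 4 / (\<eta> * a) * 2 powr (-(real n * \<delta>))) \<longlonglongrightarrow> 0"
    by simp
  show ?thesis
  proof (rule tendsto_sandwich[OF _ _ tendsto_const R'])
    show "eventually (\<lambda>n. 0 \<le> measure (measure_pmf (map_pmf fst (A n))) {x. Bad n \<delta> \<eta> x}) sequentially" by simp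
    show "eventually (\<lambda>n. measure (measure_pmf (map_pmf fst (A n))) {x. Bad n \<delta> \<eta> x} \<le>
        measure (measure_pmf (map_pmf fst (A n))) (Atyp A B n \<gamma>) + 4 / (\<eta> * a) * 2 powr (-(real n * \<delta>))) sequentially"
      using ev1
    proof (rule eventually_mono)
      fix n assume h: "b * 2 powr (-(real n * \<gamma>)) \<le> a \<and> 4 * b * 2 powr (-(real n * \<gamma>)) \<le> a * \<eta>"
      let ?Mk = "{x. PX A n x > 0 \<and> \<eta> * PX A n x < 2 * enn2real (mA n \<delta> x)}"
      have h1: "measure (measure_pmf (map_pmf fst (A n))) {x. Bad n \<delta> \<eta> x} \<le> measure (measure_pmf (map_pmf fst (A n))) (Atyp A B n \<gamma> \<union> ?Mk)"
        using Bad_sub[OF g e] h by (intro measure_pmf.finite_measure_mono) auto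
      have h2: "measure (measure_pmf (map_pmf fst (A n))) (Atyp A B n \<gamma> \<union> ?Mk) \<le> measure (measure_pmf (map_pmf fst (A n))) (Atyp A B n \<gamma>) + measure (measure_pmf (map_pmf fst (A n))) ?Mk"
        by (rule measure_Un_le) auto
      have h3: "measure (measure_pmf (map_pmf fst (A n))) ?Mk \<le> 4 / (\<eta> * a * 2 powr (real n * \<delta>))"
        by (rule Mk_bound) (use d e in auto)
      have h4: "4 / (\<eta> * a * 2 powr (real n * \<delta>)) = 4 / (\<eta> * a) * 2 powr (-(real n * \<delta>))"
        by (simp add: powr_minus field_simps)
      show "measure (measure_pmf (map_pmf fst (A n))) {x. Bad n \<delta> \<eta> x} \<le>
        measure (measure_pmf (map_pmf fst (A n))) (Atyp A B n \<gamma>) + 4 / (\<eta> * a) * 2 powr (-(real n * \<delta>))"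
        using h1 h2 h3 h4 by linarith
    qed
  qed
qed

end


context mixsrc begin

lemma ind_fst: "indicator T (fst xy) = (indicator (fst -` T) xy :: ennreal)"
  by (simp add: indicator_def)

lemma small_badA:
  assumes uiA: "uniformly_integrable A" and D: "D_lower A B > 0" and d: "\<delta> > 0" and e: "\<eta> > 0"
  shows "small (\<lambda>n. \<integral>\<^sup>+xy. indicator (fst -` {x. Bad n \<delta> \<eta> x}) xy * ennreal (LL A n (fst xy) (snd xy)) \<partial>measure_pmf (A n))"
  by (rule ui_small[OF uiA]) (use Bad_prob[OF D d e] in simp)

lemma AU:
  assumes uiA: "uniformly_integrable A" and uiB: "uniformly_integrable B"
    and DAB: "D_lower A B > 0" and DBA: "D_lower B A > 0"
    and e: "0 < \<eta>" "\<eta> < \<epsilon>" "\<epsilon> < 1" and z: "\<zeta> > 0"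
  shows "eventually (\<lambda>n. G A M n \<epsilon> \<le> Hs_eps A (\<epsilon> - \<eta>) n + ennreal (real n * \<zeta>)) sequentially"
proof -
  interpret sw: mixsrc B A M b a by (rule swap)
  define \<delta> where "\<delta> = \<zeta> / 2"
  have d: "\<delta> > 0" using z by (simp add: \<delta>_def)
  obtain \<gamma> where g: "\<gamma> > 0" and AtB: "(\<lambda>n. measure (measure_pmf (map_pmf fst (B n))) (Atyp B A n \<gamma>)) \<longlonglongrightarrow> 0"
    using D_pos[OF DBA] by auto
  let ?LMA = "\<lambda>n S. \<integral>\<^sup>+xy. indicator S xy * ennreal (LL M n (fst xy) (snd xy)) \<partial>measure_pmf (A n)"
  let ?LMB = "\<lambda>n S. \<integral>\<^sup>+xy. indicator S xy * ennreal (LL M n (fst xy) (snd xy)) \<partial>measure_pmf (B n)"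
  let ?LA = "\<lambda>n S. \<integral>\<^sup>+xy. indicator S xy * ennreal (LL A n (fst xy) (snd xy)) \<partial>measure_pmf (A n)"
  let ?LB = "\<lambda>n S. \<integral>\<^sup>+xy. indicator S xy * ennreal (LL B n (fst xy) (snd xy)) \<partial>measure_pmf (B n)"
  define F where "F n = ennreal (1/\<epsilon>) * ((?LA n (fst -` {x. Bad n \<delta> \<eta> x}) + ennreal (1 / (a * ln 2)))
      + (ennreal (2 powr (-(real n * \<gamma>))) * ?LB n UNIV + ennreal (2 powr (-(real n * \<gamma>))) * ennreal (1 / (b * ln 2)))
      + ennreal (b / a) * (?LB n (fst -` Atyp B A n \<gamma>) + ennreal (1 / (b * ln 2))))" for n
  have smallF: "small F"
  proof -
    have s1: "small (\<lambda>n. ?LA n (fst -` {x. Bad n \<delta> \<eta> x}))" by (rule small_badA[OF uiA DAB d e(1)])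
    have s2: "small (\<lambda>n. ennreal (2 powr (-(real n * \<gamma>))) * ?LB n UNIV)"
      using small_exp[OF uiB g] by simp
    have s3: "small (\<lambda>n. ennreal (2 powr (-(real n * \<gamma>))) * ennreal (1 / (b * ln 2)))"
    proof (rule small_mono[OF small_const[of "1 / (b * ln 2)"]])
      show "eventually (\<lambda>n. ennreal (2 powr (-(real n * \<gamma>))) * ennreal (1 / (b * ln 2)) \<le> ennreal (1 / (b * ln 2))) sequentially"
      proof (intro always_eventually allI)
        fix n
        have "2 powr (-(real n * \<gamma>)) \<le> 2 powr 0" by (intro powr_mono) (use g in auto)
        hence "2 powr (-(real n * \<gamma>)) \<le> 1" by simp
        hence "ennreal (2 powr (-(real n * \<gamma>))) \<le> 1" by (simp add: ennreal_le_1)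
        thus "ennreal (2 powr (-(real n * \<gamma>))) * ennreal (1 / (b * ln 2)) \<le> ennreal (1 / (b * ln 2))"
          using mult_right_mono[of "ennreal (2 powr (-(real n * \<gamma>)))" 1 "ennreal (1 / (b * ln 2))"] by simp
      qed
    qed
    have s4: "small (\<lambda>n. ?LB n (fst -` Atyp B A n \<gamma>))"
      by (rule ui_small[OF uiB]) (use AtB in simp)
    show ?thesis unfolding F_def
      by (intro small_cmult small_add s1 s2 s3 s4 small_const) (use e a_pos b_pos in auto)
  qed
  have BadU: "(\<integral>\<^sup>+x. indicator {x. Bad n \<delta> \<eta> x} x * ennreal (PX A n x * hbar M n \<epsilon> x) \<partial>count_space UNIV) \<le> F n" for n
  proof -
    have "(\<integral>\<^sup>+x. indicator {x. Bad n \<delta> \<eta> x} x * ennreal (PX A n x * hbar M n \<epsilon> x) \<partial>count_space UNIV) \<le>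
      ennreal (1/\<epsilon>) * ((\<integral>\<^sup>+xy. indicator {xy. Bad n \<delta> \<eta> (fst xy)} xy * ennreal (LL M n (fst xy) (snd xy)) \<partial>measure_pmf (A n))
       + ennreal (2 powr (-(real n * \<gamma>))) * (\<integral>\<^sup>+xy. ennreal (LL M n (fst xy) (snd xy)) \<partial>measure_pmf (B n))
       + ennreal (b / a) * (\<integral>\<^sup>+xy. indicator {xy. fst xy \<in> Atyp B A n \<gamma>} xy * ennreal (LL M n (fst xy) (snd xy)) \<partial>measure_pmf (B n)))"
      by (rule BU_n[OF _ e(3) g]) (use e in auto)
    also have "\<dots> = ennreal (1/\<epsilon>) * (?LMA n (fst -` {x. Bad n \<delta> \<eta> x}) + ennreal (2 powr (-(real n * \<gamma>))) * ?LMB n UNIV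
       + ennreal (b / a) * ?LMB n (fst -` Atyp B A n \<gamma>))"
      by (simp add: vimage_def)
    also have "\<dots> \<le> F n" unfolding F_def
    proof (intro mult_left_mono add_mono WL sw.WL order.refl)
      have "ennreal (2 powr (-(real n * \<gamma>))) * ?LMB n UNIV \<le> ennreal (2 powr (-(real n * \<gamma>))) * (?LB n UNIV + ennreal (1 / (b * ln 2)))"
        by (intro mult_left_mono sw.WL) auto
      thus "ennreal (2 powr (-(real n * \<gamma>))) * ?LMB n UNIV \<le> ennreal (2 powr (-(real n * \<gamma>))) * ?LB n UNIV + ennreal (2 powr (-(real n * \<gamma>))) * ennreal (1 / (b * ln 2))"
        by (simp add: distrib_left)
    qed auto
    finally show ?thesis .
  qed
  have "eventually (\<lambda>n. F n \<le> ennreal (real n * \<delta>)) sequentially" by (rule smallD[OF smallF d])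
  thus ?thesis
  proof (rule eventually_mono)
    fix n assume Fn: "F n \<le> ennreal (real n * \<delta>)"
    have "G A M n \<epsilon> \<le> Hs_eps A (\<epsilon> - \<eta>) n + ennreal (real n * \<delta>) +
     (\<integral>\<^sup>+x. indicator {x. Bad n \<delta> \<eta> x} x * ennreal (PX A n x * hbar M n \<epsilon> x) \<partial>count_space UNIV)"
      by (rule GU_n[OF e]) (use d in auto)
    also have "\<dots> \<le> Hs_eps A (\<epsilon> - \<eta>) n + ennreal (real n * \<delta>) + ennreal (real n * \<delta>)"
      using BadU[of n] Fn by (intro add_left_mono) auto
    also have "\<dots> = Hs_eps A (\<epsilon> - \<eta>) n + ennreal (real n * \<zeta>)"
      using d by (simp add: add.assoc ennreal_plus[symmetric] \<delta>_def del: ennreal_plus)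
    finally show "G A M n \<epsilon> \<le> Hs_eps A (\<epsilon> - \<eta>) n + ennreal (real n * \<zeta>)" .
  qed
qed

lemma AL:
  assumes uiA: "uniformly_integrable A" and DAB: "D_lower A B > 0"
    and e: "0 < \<epsilon>" "0 < \<eta>" "\<epsilon> + \<eta> < 1" and z: "\<zeta> > 0"
  shows "eventually (\<lambda>n. Hs_eps A (\<epsilon> + \<eta>) n \<le> G A M n \<epsilon> + ennreal (real n * \<zeta>)) sequentially"
proof -
  define \<delta> where "\<delta> = \<zeta> / 2"
  have d: "\<delta> > 0" using z by (simp add: \<delta>_def)
  let ?LA = "\<lambda>n S. \<integral>\<^sup>+xy. indicator S xy * ennreal (LL A n (fst xy) (snd xy)) \<partial>measure_pmf (A n)"
  define F where "F n = ennreal (1/(\<epsilon>+\<eta>)) * ?LA n (fst -` {x. Bad n \<delta> \<eta> x})" for n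
  have smallF: "small F" unfolding F_def
    by (intro small_cmult small_badA[OF uiA DAB d e(2)]) (use e in auto)
  have BadL: "(\<integral>\<^sup>+x. indicator {x. Bad n \<delta> \<eta> x} x * ennreal (PX A n x * hbar A n (\<epsilon> + \<eta>) x) \<partial>count_space UNIV) \<le> F n" for n
  proof -
    have "(\<integral>\<^sup>+x. indicator {x. Bad n \<delta> \<eta> x} x * ennreal (PX A n x * hbar A n (\<epsilon> + \<eta>) x) \<partial>count_space UNIV) \<le>
      ennreal (1/(\<epsilon>+\<eta>)) * (\<integral>\<^sup>+xy. indicator {x. Bad n \<delta> \<eta> x} (fst xy) * ennreal (LL A n (fst xy) (snd xy)) \<partial>measure_pmf (A n))"
      by (rule markov_sum) (use e in auto)
    also have "\<dots> = F n" unfolding F_def by (simp add: ind_fst)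
    finally show ?thesis .
  qed
  have "eventually (\<lambda>n. F n \<le> ennreal (real n * \<delta>)) sequentially" by (rule smallD[OF smallF d])
  thus ?thesis
  proof (rule eventually_mono)
    fix n assume Fn: "F n \<le> ennreal (real n * \<delta>)"
    have "Hs_eps A (\<epsilon> + \<eta>) n \<le> G A M n \<epsilon> + ennreal (real n * \<delta>) +
     (\<integral>\<^sup>+x. indicator {x. Bad n \<delta> \<eta> x} x * ennreal (PX A n x * hbar A n (\<epsilon> + \<eta>) x) \<partial>count_space UNIV)"
      by (rule GL_n[OF e]) (use d in auto)
    also have "\<dots> \<le> G A M n \<epsilon> + ennreal (real n * \<delta>) + ennreal (real n * \<delta>)"
      using BadL[of n] Fn by (intro add_left_mono) auto
    also have "\<dots> = G A M n \<epsilon> + ennreal (real n * \<zeta>)"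
      using d by (simp add: add.assoc ennreal_plus[symmetric] \<delta>_def del: ennreal_plus)
    finally show "Hs_eps A (\<epsilon> + \<eta>) n \<le> G A M n \<epsilon> + ennreal (real n * \<zeta>)" .
  qed
qed

end


lemma ereal_mult_nn: "0 \<le> (x::ereal) \<Longrightarrow> 0 \<le> y \<Longrightarrow> 0 \<le> x * y"
  by (simp add: ereal_zero_le_0_iff)

lemma Hs_rate_eq: "Hs_rate Q \<epsilon> n = enn2ereal (ennreal (1 / real n) * Hs_eps Q \<epsilon> n)"
  by (simp add: Hs_rate_def times_ennreal.rep_eq)

lemma Hs_rate_nonneg: "Hs_rate Q \<epsilon> n \<ge> 0"
  by (simp add: Hs_rate_eq)

lemma enn2ereal_le3:
  assumes "X \<le> ennreal a * Y + ennreal b * Z + ennreal z" "a \<ge> 0" "b \<ge> 0" "z \<ge> 0"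
  shows "enn2ereal X \<le> ereal a * enn2ereal Y + ereal b * enn2ereal Z + ereal z"
proof -
  have "enn2ereal X \<le> enn2ereal (ennreal a * Y + ennreal b * Z + ennreal z)"
    using assms(1) by (simp add: less_eq_ennreal.rep_eq)
  thus ?thesis using assms by (simp add: plus_ennreal.rep_eq times_ennreal.rep_eq)
qed

lemma enn2ereal_le3':
  assumes "ennreal a * Y + ennreal b * Z \<le> X + ennreal z" "a \<ge> 0" "b \<ge> 0" "z \<ge> 0"
  shows "ereal a * enn2ereal Y + ereal b * enn2ereal Z \<le> enn2ereal X + ereal z"
proof -
  have "enn2ereal (ennreal a * Y + ennreal b * Z) \<le> enn2ereal (X + ennreal z)"
    using assms(1) by (simp add: less_eq_ennreal.rep_eq)
  thus ?thesis using assms by (simp add: plus_ennreal.rep_eq times_ennreal.rep_eq)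
qed

lemma Hs_rate_antimono:
  assumes e: "0 < \<epsilon>" "\<epsilon> \<le> \<epsilon>'" "\<epsilon>' < 1"
  shows "Hs_rate Q \<epsilon>' n \<le> Hs_rate Q \<epsilon> n"
proof -
  have h1: "Hs_eps Q \<epsilon>' n = (\<integral>\<^sup>+x. ennreal (PX Q n x * hbar Q n \<epsilon>' x) \<partial>count_space UNIV)"
    by (rule Hs_eps_int) (use e in auto)
  have h2: "Hs_eps Q \<epsilon> n = (\<integral>\<^sup>+x. ennreal (PX Q n x * hbar Q n \<epsilon> x) \<partial>count_space UNIV)"
    by (rule Hs_eps_int) (use e in auto)
  have "Hs_eps Q \<epsilon>' n \<le> Hs_eps Q \<epsilon> n"
    unfolding h1 h2
  proof (intro nn_integral_mono ennreal_leI)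
    fix x
    show "PX Q n x * hbar Q n \<epsilon>' x \<le> PX Q n x * hbar Q n \<epsilon> x"
    proof (cases "PX Q n x > 0")
      case True thus ?thesis using hbar_mono[OF True e] by (simp add: mult_left_mono)
    next
      case False thus ?thesis using PX_zero[OF False] by simp
    qed
  qed
  hence "ennreal (1 / real n) * Hs_eps Q \<epsilon>' n \<le> ennreal (1 / real n) * Hs_eps Q \<epsilon> n" by (rule mult_left_mono) simp
  thus ?thesis unfolding Hs_rate_eq by (simp add: less_eq_ennreal.rep_eq)
qed

definition uQ :: "('a, 'b) source \<Rightarrow> real \<Rightarrow> ereal" where
  "uQ Q \<epsilon> = limsup (\<lambda>n. Hs_rate Q \<epsilon> n)"

lemma uQ_nonneg: "uQ Q \<epsilon> \<ge> 0"
proof -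
  have "limsup (\<lambda>n. (0::ereal)) \<le> limsup (\<lambda>n. Hs_rate Q \<epsilon> n)"
    by (intro Limsup_mono always_eventually allI Hs_rate_nonneg)
  thus ?thesis by (simp add: uQ_def Limsup_const)
qed

lemma uQ_antimono: "0 < \<epsilon> \<Longrightarrow> \<epsilon> \<le> \<epsilon>' \<Longrightarrow> \<epsilon>' < 1 \<Longrightarrow> uQ Q \<epsilon>' \<le> uQ Q \<epsilon>"
  unfolding uQ_def by (intro Limsup_mono always_eventually allI Hs_rate_antimono)

lemma Hs_upper_eq: "Hs_upper Q = (SUP \<epsilon>\<in>{0<..<1}. uQ Q \<epsilon>)"
proof -
  let ?S = "SUP \<epsilon>\<in>{0<..<1}. uQ Q \<epsilon>"
  have "((\<lambda>\<epsilon>. uQ Q \<epsilon>) \<longlongrightarrow> ?S) (at_right 0)"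
  proof (rule order_tendstoI)
    fix y assume y: "y < ?S"
    then obtain \<epsilon>1 where e1: "\<epsilon>1 \<in> {0<..<1}" "y < uQ Q \<epsilon>1" by (auto simp: less_SUP_iff)
    show "eventually (\<lambda>\<epsilon>. y < uQ Q \<epsilon>) (at_right 0)"
      unfolding eventually_at_right_field
    proof (intro exI[of _ \<epsilon>1] conjI allI impI)
      fix \<epsilon> :: real assume "0 < \<epsilon>" "\<epsilon> < \<epsilon>1"
      hence "uQ Q \<epsilon>1 \<le> uQ Q \<epsilon>" using e1 by (intro uQ_antimono) auto
      thus "y < uQ Q \<epsilon>" using e1 by simp
    qed (use e1 in auto)
  next
    fix y assume y: "?S < y"
    show "eventually (\<lambda>\<epsilon>. uQ Q \<epsilon> < y) (at_right 0)"
      unfolding eventually_at_right_field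
    proof (intro exI[of _ 1] conjI allI impI)
      fix \<epsilon> :: real assume "0 < \<epsilon>" "\<epsilon> < 1"
      hence "uQ Q \<epsilon> \<le> ?S" by (intro SUP_upper) auto
      thus "uQ Q \<epsilon> < y" using y by simp
    qed auto
  qed
  hence "Lim (at_right 0) (\<lambda>\<epsilon>. uQ Q \<epsilon>) = ?S" by (intro tendsto_Lim) auto
  thus ?thesis unfolding Hs_upper_def uQ_def by simp
qed

lemma lim_limsup_add:
  fixes u v :: "nat \<Rightarrow> ereal"
  assumes u: "u \<longlonglongrightarrow> L" and u0: "\<And>n. u n \<ge> 0" and v0: "\<And>n. v n \<ge> 0"
  shows "L + limsup v \<le> limsup (\<lambda>n. u n + v n)"
proof (cases "L = \<infinity>")
  case True
  have "limsup u = L" using lim_imp_Limsup[of sequentially u L] u by simp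
  moreover have "limsup u \<le> limsup (\<lambda>n. u n + v n)"
    by (intro Limsup_mono always_eventually allI) (use v0 in \<open>simp add: add_increasing2\<close>)
  ultimately show ?thesis using True by simp
next
  case False
  have "L \<ge> 0" using u u0 by (intro tendsto_lowerbound[OF u]) (auto intro: always_eventually)
  hence "\<bar>L\<bar> \<noteq> \<infinity>" using False by auto
  thus ?thesis using ereal_limsup_lim_add[OF u] by simp
qed


context mixsrc begin

lemma U_ev:
  assumes uiA: "uniformly_integrable A" and uiB: "uniformly_integrable B"
    and DAB: "D_lower A B > 0" and DBA: "D_lower B A > 0"
    and e: "0 < \<eta>" "\<eta> < \<epsilon>" "\<epsilon> < 1" and z: "\<zeta> > 0"
  shows "eventually (\<lambda>n. Hs_rate M \<epsilon> n \<le> ereal a * Hs_rate A (\<epsilon> - \<eta>) n + ereal b * Hs_rate B (\<epsilon> - \<eta>) n + ereal \<zeta>) sequentially"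
proof -
  interpret sw: mixsrc B A M b a by (rule swap)
  have ev: "eventually (\<lambda>n. (G A M n \<epsilon> \<le> Hs_eps A (\<epsilon> - \<eta>) n + ennreal (real n * \<zeta>) \<and>
      G B M n \<epsilon> \<le> Hs_eps B (\<epsilon> - \<eta>) n + ennreal (real n * \<zeta>)) \<and> n \<ge> 1) sequentially"
    by (intro eventually_conj AU sw.AU uiA uiB DAB DBA e z eventually_ge_at_top)
  thus ?thesis
  proof (rule eventually_mono)
    fix n assume h: "(G A M n \<epsilon> \<le> Hs_eps A (\<epsilon> - \<eta>) n + ennreal (real n * \<zeta>) \<and>
      G B M n \<epsilon> \<le> Hs_eps B (\<epsilon> - \<eta>) n + ennreal (real n * \<zeta>)) \<and> n \<ge> 1"
    have "Hs_eps M \<epsilon> n = ennreal a * G A M n \<epsilon> + ennreal b * G B M n \<epsilon>" by (rule Hs_decomp) (use e in auto)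
    also have "\<dots> \<le> ennreal a * (Hs_eps A (\<epsilon> - \<eta>) n + ennreal (real n * \<zeta>)) + ennreal b * (Hs_eps B (\<epsilon> - \<eta>) n + ennreal (real n * \<zeta>))"
      using h by (intro add_mono mult_left_mono) auto
    also have "\<dots> = ennreal a * Hs_eps A (\<epsilon> - \<eta>) n + ennreal b * Hs_eps B (\<epsilon> - \<eta>) n + (ennreal a + ennreal b) * ennreal (real n * \<zeta>)"
      by (simp add: distrib_left distrib_right add_ac)
    also have "ennreal a + ennreal b = 1" using a_pos b_pos ab by (simp add: ennreal_plus[symmetric] del: ennreal_plus)
    finally have h2: "Hs_eps M \<epsilon> n \<le> ennreal a * Hs_eps A (\<epsilon> - \<eta>) n + ennreal b * Hs_eps B (\<epsilon> - \<eta>) n + ennreal (real n * \<zeta>)" by simp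
    have "ennreal (1 / real n) * Hs_eps M \<epsilon> n \<le> ennreal (1 / real n) * (ennreal a * Hs_eps A (\<epsilon> - \<eta>) n + ennreal b * Hs_eps B (\<epsilon> - \<eta>) n + ennreal (real n * \<zeta>))"
      by (intro mult_left_mono h2) auto
    also have "\<dots> = ennreal a * (ennreal (1 / real n) * Hs_eps A (\<epsilon> - \<eta>) n) + ennreal b * (ennreal (1 / real n) * Hs_eps B (\<epsilon> - \<eta>) n) + ennreal (1 / real n) * ennreal (real n * \<zeta>)"
      by (simp add: distrib_left mult_ac)
    also have "ennreal (1 / real n) * ennreal (real n * \<zeta>) = ennreal \<zeta>"
      using h z by (simp add: ennreal_mult[symmetric])
    finally show "Hs_rate M \<epsilon> n \<le> ereal a * Hs_rate A (\<epsilon> - \<eta>) n + ereal b * Hs_rate B (\<epsilon> - \<eta>) n + ereal \<zeta>"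
      unfolding Hs_rate_eq using a_pos b_pos z by (intro enn2ereal_le3) auto
  qed
qed

lemma L_ev:
  assumes uiA: "uniformly_integrable A" and uiB: "uniformly_integrable B"
    and DAB: "D_lower A B > 0" and DBA: "D_lower B A > 0"
    and e: "0 < \<epsilon>" "0 < \<eta>" "\<epsilon> + \<eta> < 1" and z: "\<zeta> > 0"
  shows "eventually (\<lambda>n. ereal a * Hs_rate A (\<epsilon> + \<eta>) n + ereal b * Hs_rate B (\<epsilon> + \<eta>) n \<le> Hs_rate M \<epsilon> n + ereal \<zeta>) sequentially"
proof -
  interpret sw: mixsrc B A M b a by (rule swap)
  have ev: "eventually (\<lambda>n. (Hs_eps A (\<epsilon> + \<eta>) n \<le> G A M n \<epsilon> + ennreal (real n * \<zeta>) \<and>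
      Hs_eps B (\<epsilon> + \<eta>) n \<le> G B M n \<epsilon> + ennreal (real n * \<zeta>)) \<and> n \<ge> 1) sequentially"
    by (intro eventually_conj AL sw.AL uiA uiB DAB DBA e z eventually_ge_at_top)
  thus ?thesis
  proof (rule eventually_mono)
    fix n assume h: "(Hs_eps A (\<epsilon> + \<eta>) n \<le> G A M n \<epsilon> + ennreal (real n * \<zeta>) \<and>
      Hs_eps B (\<epsilon> + \<eta>) n \<le> G B M n \<epsilon> + ennreal (real n * \<zeta>)) \<and> n \<ge> 1"
    have "ennreal a * Hs_eps A (\<epsilon> + \<eta>) n + ennreal b * Hs_eps B (\<epsilon> + \<eta>) n \<le>
       ennreal a * (G A M n \<epsilon> + ennreal (real n * \<zeta>)) + ennreal b * (G B M n \<epsilon> + ennreal (real n * \<zeta>))"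
      using h by (intro add_mono mult_left_mono) auto
    also have "\<dots> = (ennreal a * G A M n \<epsilon> + ennreal b * G B M n \<epsilon>) + (ennreal a + ennreal b) * ennreal (real n * \<zeta>)"
      by (simp add: distrib_left distrib_right add_ac)
    also have "ennreal a + ennreal b = 1" using a_pos b_pos ab by (simp add: ennreal_plus[symmetric] del: ennreal_plus)
    also have "ennreal a * G A M n \<epsilon> + ennreal b * G B M n \<epsilon> = Hs_eps M \<epsilon> n" by (rule Hs_decomp[symmetric]) (use e in auto)
    finally have h2: "ennreal a * Hs_eps A (\<epsilon> + \<eta>) n + ennreal b * Hs_eps B (\<epsilon> + \<eta>) n \<le> Hs_eps M \<epsilon> n + ennreal (real n * \<zeta>)" by simp
    have "ennreal a * (ennreal (1 / real n) * Hs_eps A (\<epsilon> + \<eta>) n) + ennreal b * (ennreal (1 / real n) * Hs_eps B (\<epsilon> + \<eta>) n)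
       = ennreal (1 / real n) * (ennreal a * Hs_eps A (\<epsilon> + \<eta>) n + ennreal b * Hs_eps B (\<epsilon> + \<eta>) n)"
      by (simp add: distrib_left mult_ac)
    also have "\<dots> \<le> ennreal (1 / real n) * (Hs_eps M \<epsilon> n + ennreal (real n * \<zeta>))"
      by (intro mult_left_mono h2) auto
    also have "\<dots> = ennreal (1 / real n) * Hs_eps M \<epsilon> n + ennreal (1 / real n) * ennreal (real n * \<zeta>)"
      by (simp add: distrib_left)
    also have "ennreal (1 / real n) * ennreal (real n * \<zeta>) = ennreal \<zeta>"
      using h z by (simp add: ennreal_mult[symmetric])
    finally show "ereal a * Hs_rate A (\<epsilon> + \<eta>) n + ereal b * Hs_rate B (\<epsilon> + \<eta>) n \<le> Hs_rate M \<epsilon> n + ereal \<zeta>"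
      unfolding Hs_rate_eq using a_pos b_pos z by (intro enn2ereal_le3') auto
  qed
qed


lemma U_lim:
  assumes uiA: "uniformly_integrable A" and uiB: "uniformly_integrable B"
    and DAB: "D_lower A B > 0" and DBA: "D_lower B A > 0"
    and e: "0 < \<eta>" "\<eta> < \<epsilon>" "\<epsilon> < 1"
  shows "uQ M \<epsilon> \<le> ereal a * uQ A (\<epsilon> - \<eta>) + ereal b * uQ B (\<epsilon> - \<eta>)"
proof (rule ereal_le_epsilon2)
  fix \<zeta> :: real assume z: "0 < \<zeta>"
  have "uQ M \<epsilon> \<le> limsup (\<lambda>n. (ereal a * Hs_rate A (\<epsilon> - \<eta>) n + ereal b * Hs_rate B (\<epsilon> - \<eta>) n) + ereal \<zeta>)"
    unfolding uQ_def by (rule Limsup_mono[OF U_ev[OF uiA uiB DAB DBA e z]])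
  also have "\<dots> \<le> limsup (\<lambda>n. ereal a * Hs_rate A (\<epsilon> - \<eta>) n + ereal b * Hs_rate B (\<epsilon> - \<eta>) n) + limsup (\<lambda>n. ereal \<zeta>)"
    by (rule ereal_limsup_add_mono)
  also have "limsup (\<lambda>n. ereal a * Hs_rate A (\<epsilon> - \<eta>) n + ereal b * Hs_rate B (\<epsilon> - \<eta>) n) \<le>
      limsup (\<lambda>n. ereal a * Hs_rate A (\<epsilon> - \<eta>) n) + limsup (\<lambda>n. ereal b * Hs_rate B (\<epsilon> - \<eta>) n)"
    by (rule ereal_limsup_add_mono)
  also have "limsup (\<lambda>n. ereal a * Hs_rate A (\<epsilon> - \<eta>) n) = ereal a * uQ A (\<epsilon> - \<eta>)"
    unfolding uQ_def using a_pos by (simp add: limsup_ereal_mult_left)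
  also have "limsup (\<lambda>n. ereal b * Hs_rate B (\<epsilon> - \<eta>) n) = ereal b * uQ B (\<epsilon> - \<eta>)"
    unfolding uQ_def using b_pos by (simp add: limsup_ereal_mult_left)
  also have "limsup (\<lambda>n. ereal \<zeta>) = ereal \<zeta>" by (simp add: Limsup_const)
  finally show "uQ M \<epsilon> \<le> ereal a * uQ A (\<epsilon> - \<eta>) + ereal b * uQ B (\<epsilon> - \<eta>) + ereal \<zeta>"
    by (simp add: add_mono)
qed

lemma L_lim:
  assumes uiA: "uniformly_integrable A" and uiB: "uniformly_integrable B"
    and DAB: "D_lower A B > 0" and DBA: "D_lower B A > 0"
    and e: "0 < \<epsilon>" "0 < \<eta>" "\<epsilon> + \<eta> < 1" and conv: "convergent (\<lambda>n. Hs_rate A (\<epsilon> + \<eta>) n)"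
  shows "ereal a * uQ A (\<epsilon> + \<eta>) + ereal b * uQ B (\<epsilon> + \<eta>) \<le> uQ M \<epsilon>"
proof (rule ereal_le_epsilon2)
  fix \<zeta> :: real assume z: "0 < \<zeta>"
  obtain l where l: "(\<lambda>n. Hs_rate A (\<epsilon> + \<eta>) n) \<longlonglongrightarrow> l" using conv by (auto simp: convergent_def)
  have ul: "uQ A (\<epsilon> + \<eta>) = l" unfolding uQ_def using lim_imp_Limsup[of sequentially _ l] l by simp
  have al: "(\<lambda>n. ereal a * Hs_rate A (\<epsilon> + \<eta>) n) \<longlonglongrightarrow> ereal a * l"
    by (rule tendsto_cmult_ereal[OF _ l]) simp
  have "ereal a * uQ A (\<epsilon> + \<eta>) + ereal b * uQ B (\<epsilon> + \<eta>) = ereal a * l + limsup (\<lambda>n. ereal b * Hs_rate B (\<epsilon> + \<eta>) n)"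
    using ul b_pos unfolding uQ_def by (simp add: limsup_ereal_mult_left)
  also have "\<dots> \<le> limsup (\<lambda>n. ereal a * Hs_rate A (\<epsilon> + \<eta>) n + ereal b * Hs_rate B (\<epsilon> + \<eta>) n)"
    by (rule lim_limsup_add[OF al]) (use a_pos b_pos Hs_rate_nonneg in \<open>auto intro!: ereal_mult_nn\<close>)
  also have "\<dots> \<le> limsup (\<lambda>n. Hs_rate M \<epsilon> n + ereal \<zeta>)"
    by (rule Limsup_mono[OF L_ev[OF uiA uiB DAB DBA e z]])
  also have "\<dots> \<le> limsup (\<lambda>n. Hs_rate M \<epsilon> n) + limsup (\<lambda>n. ereal \<zeta>)"
    by (rule ereal_limsup_add_mono)
  also have "limsup (\<lambda>n. ereal \<zeta>) = ereal \<zeta>" by (simp add: Limsup_const)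
  finally show "ereal a * uQ A (\<epsilon> + \<eta>) + ereal b * uQ B (\<epsilon> + \<eta>) \<le> uQ M \<epsilon> + ereal \<zeta>"
    by (simp add: uQ_def)
qed

lemma core:
  assumes uiA: "uniformly_integrable A" and uiB: "uniformly_integrable B"
    and DAB: "D_lower A B > 0" and DBA: "D_lower B A > 0"
    and conv: "\<exists>\<epsilon>0>0. \<forall>\<epsilon>. 0 < \<epsilon> \<and> \<epsilon> < \<epsilon>0 \<longrightarrow> convergent (\<lambda>n. Hs_rate A \<epsilon> n)"
  shows "Hs_upper M = ereal a * Hs_upper A + ereal b * Hs_upper B"
proof -
  obtain \<epsilon>0 where e0: "\<epsilon>0 > 0" and cv: "\<And>\<epsilon>. 0 < \<epsilon> \<Longrightarrow> \<epsilon> < \<epsilon>0 \<Longrightarrow> convergent (\<lambda>n. Hs_rate A \<epsilon> n)"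
    using conv by auto
  let ?I = "{0<..<1::real}"
  have I: "?I \<noteq> {}" by (auto intro: exI[of _ "1/2"])
  let ?SA = "SUP \<epsilon>\<in>?I. uQ A \<epsilon>" and ?SB = "SUP \<epsilon>\<in>?I. uQ B \<epsilon>" and ?SM = "SUP \<epsilon>\<in>?I. uQ M \<epsilon>"
  have sum: "ereal a * ?SA + ereal b * ?SB = (SUP \<epsilon>\<in>?I. ereal a * uQ A \<epsilon> + ereal b * uQ B \<epsilon>)"
  proof -
    have "ereal a * ?SA = (SUP \<epsilon>\<in>?I. ereal a * uQ A \<epsilon>)"
      by (rule SUP_ereal_mult_left[symmetric, OF I uQ_nonneg]) (use a_pos in auto)
    moreover have "ereal b * ?SB = (SUP \<epsilon>\<in>?I. ereal b * uQ B \<epsilon>)"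
      by (rule SUP_ereal_mult_left[symmetric, OF I uQ_nonneg]) (use b_pos in auto)
    moreover have "(SUP \<epsilon>\<in>?I. ereal a * uQ A \<epsilon> + ereal b * uQ B \<epsilon>) = (SUP \<epsilon>\<in>?I. ereal a * uQ A \<epsilon>) + (SUP \<epsilon>\<in>?I. ereal b * uQ B \<epsilon>)"
    proof (rule SUP_ereal_add_directed)
      fix i j assume ij: "i \<in> ?I" "j \<in> ?I"
      show "\<exists>k\<in>?I. ereal a * uQ A i + ereal b * uQ B j \<le> ereal a * uQ A k + ereal b * uQ B k"
      proof (intro bexI[of _ "min i j"])
        show "ereal a * uQ A i + ereal b * uQ B j \<le> ereal a * uQ A (min i j) + ereal b * uQ B (min i j)"
          using ij a_pos b_pos by (intro add_mono ereal_mult_left_mono uQ_antimono) auto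
      qed (use ij in auto)
    qed (use a_pos b_pos uQ_nonneg in \<open>auto intro!: ereal_mult_nn\<close>)
    ultimately show ?thesis by simp
  qed
  have le: "?SM \<le> ereal a * ?SA + ereal b * ?SB"
  proof (rule SUP_least)
    fix \<epsilon> assume e: "\<epsilon> \<in> ?I"
    have "uQ M \<epsilon> \<le> ereal a * uQ A (\<epsilon> - \<epsilon>/2) + ereal b * uQ B (\<epsilon> - \<epsilon>/2)"
      by (rule U_lim[OF uiA uiB DAB DBA]) (use e in auto)
    also have "\<dots> \<le> ereal a * ?SA + ereal b * ?SB"
      using e a_pos b_pos by (intro add_mono ereal_mult_left_mono SUP_upper) auto
    finally show "uQ M \<epsilon> \<le> ereal a * ?SA + ereal b * ?SB" .
  qed
  have ge: "ereal a * ?SA + ereal b * ?SB \<le> ?SM"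
    unfolding sum
  proof (rule SUP_least)
    fix \<epsilon> assume e: "\<epsilon> \<in> ?I"
    define \<epsilon>' where "\<epsilon>' = min \<epsilon> \<epsilon>0 / 3"
    have e': "0 < \<epsilon>'" "\<epsilon>' + \<epsilon>' < \<epsilon>0" "\<epsilon>' + \<epsilon>' \<le> \<epsilon>" "\<epsilon>' + \<epsilon>' < 1" "\<epsilon>' < 1"
      using e e0 by (auto simp: \<epsilon>'_def min_def)
    have "ereal a * uQ A \<epsilon> + ereal b * uQ B \<epsilon> \<le> ereal a * uQ A (\<epsilon>' + \<epsilon>') + ereal b * uQ B (\<epsilon>' + \<epsilon>')"
      using e e' a_pos b_pos by (intro add_mono ereal_mult_left_mono uQ_antimono) auto
    also have "\<dots> \<le> uQ M \<epsilon>'"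
      by (rule L_lim[OF uiA uiB DAB DBA]) (use e' cv in auto)
    also have "\<dots> \<le> ?SM" using e' by (intro SUP_upper) auto
    finally show "ereal a * uQ A \<epsilon> + ereal b * uQ B \<epsilon> \<le> ?SM" .
  qed
  show ?thesis unfolding Hs_upper_eq using le ge by (rule antisym)
qed

end

theorem corollary2:
  fixes P1 P2 P :: "('a::countable, 'b::countable) source" and \<alpha>1 \<alpha>2 :: real
  assumes src1: "general_source P1" and src2: "general_source P2"
    and ui1: "uniformly_integrable P1" and ui2: "uniformly_integrable P2"
    and D12: "D_lower P1 P2 > 0" and D21: "D_lower P2 P1 > 0"
    and a1: "\<alpha>1 > 0" and a2: "\<alpha>2 > 0" and a12: "\<alpha>1 + \<alpha>2 = 1"
    and mix: "\<And>n xy. pmf (P n) xy = \<alpha>1 * pmf (P1 n) xy + \<alpha>2 * pmf (P2 n) xy"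
    and lim: "(\<exists>\<epsilon>0>0. \<forall>\<epsilon>. 0 < \<epsilon> \<and> \<epsilon> < \<epsilon>0 \<longrightarrow> convergent (\<lambda>n. Hs_rate P1 \<epsilon> n)) \<or>
              (\<exists>\<epsilon>0>0. \<forall>\<epsilon>. 0 < \<epsilon> \<and> \<epsilon> < \<epsilon>0 \<longrightarrow> convergent (\<lambda>n. Hs_rate P2 \<epsilon> n))"
  shows "Hs_upper P = ereal \<alpha>1 * Hs_upper P1 + ereal \<alpha>2 * Hs_upper P2"
proof -
  interpret m: mixsrc P1 P2 P \<alpha>1 \<alpha>2 by unfold_locales (use a1 a2 a12 mix in auto)
  from lim show ?thesis
  proof
    assume c1: "\<exists>\<epsilon>0>0. \<forall>\<epsilon>. 0 < \<epsilon> \<and> \<epsilon> < \<epsilon>0 \<longrightarrow> convergent (\<lambda>n. Hs_rate P1 \<epsilon> n)"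
    show ?thesis by (rule m.core[OF ui1 ui2 D12 D21 c1])
  next
    assume c2: "\<exists>\<epsilon>0>0. \<forall>\<epsilon>. 0 < \<epsilon> \<and> \<epsilon> < \<epsilon>0 \<longrightarrow> convergent (\<lambda>n. Hs_rate P2 \<epsilon> n)"
    interpret m2: mixsrc P2 P1 P \<alpha>2 \<alpha>1 by (rule m.swap)
    have "Hs_upper P = ereal \<alpha>2 * Hs_upper P2 + ereal \<alpha>1 * Hs_upper P1"
      by (rule m2.core[OF ui2 ui1 D21 D12 c2])
    thus ?thesis by (simp add: add.commute)
  qed
qed

end
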